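(* Let $(R,\mathfrak{m})$ be a Noetherian local ring and let $I$ be an ideal of $R$. Let $x_1,\ldots,x_s,y$ be a minimal generating set of $I$ and $J=(x_1,\ldots,x_s)$. Assume that $x_1,\ldots,x_s$ is an $R$-sequence and that the initial forms $x_1^*,\ldots,x_{s-1}^*$ form a $\mathbf{G}(I)$-sequence. Then, for each $n\geq 2$, every $F\in Q_n$ satisfies $F(0,\ldots,0,1)\in (JI^{n-1}:y^n)$, and the map $F\mapsto F(0,\ldots,0,1)$ induces an isomorphism of $R$-modules $$\left[\frac{Q}{Q\langle n-1\rangle}\right]_n\cong \frac{JI^{n-1}:y^{n}}{JI^{n-2}:y^{n-1}}.$$ In particular, if $J$ is a reduction of $I$ with reduction number $r=\mathrm{r}_J(I)$, then $\mathrm{rt}(I)=\mathrm{r}_J(I)+1$ and there is a form $Y^{r+1}-\sum_{i=1}^s X_iF_i\in Q_{r+1}$, with $F_i\in V_r$, such that $Q=(Y^{r+1}-\sum_i X_iF_i)+Q\langle r\rangle$.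
   Context: $\mathbf{R}(I)=R[It]=\bigoplus_{n\geq0}I^nt^n$ is the Rees algebra and $\mathbf{G}(I)=\bigoplus_{n\geq 0}I^n/I^{n+1}$ the associated graded ring; $x_i^*$ denotes the class of $x_i$ in $I/I^2$. $V=R[X_1,\ldots,X_s,Y]$ is a polynomial ring graded by total degree in the variables, $V_n$ its degree-$n$ component, and $\varphi:V\to\mathbf{R}(I)$ is the graded $R$-algebra map with $X_i\mapsto x_it$, $Y\mapsto yt$. $Q=\ker\varphi=\bigoplus_{n\geq1}Q_n$ (the equations of $\mathbf{R}(I)$), and for $n\geq1$, $Q\langle n\rangle$ is the ideal of $V$ generated by the homogeneous elements of $Q$ of degree at most $n$; $[Q/Q\langle n-1\rangle]_n$ denotes the degree-$n$ component. Convention $I^0=R$. The relation type $\mathrm{rt}(I)$ is the least $N\geq1$ with $Q=Q\langle N\rangle$. $J\subseteq I$ is a reduction of $I$ if $I^{m+1}=JI^m$ for some $m\geq 0$, and the reduction number $\mathrm{r}_J(I)$ is the least such $m$. *)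

theory Defs
  imports Main "HOL-Library.Poly_Mapping" "HOL-Computational_Algebra.Polynomial"
begin

definition is_ideal :: "'a::comm_ring_1 set \<Rightarrow> bool" where
  "is_ideal A \<longleftrightarrow> 0 \<in> A \<and> (\<forall>a\<in>A. \<forall>b\<in>A. a + b \<in> A) \<and> (\<forall>r. \<forall>a\<in>A. r * a \<in> A)"

definition gen_ideal :: "'a::comm_ring_1 set \<Rightarrow> 'a set" where
  "gen_ideal S = {a. \<exists>(k::nat) c g. (\<forall>i<k. g i \<in> S) \<and> a = (\<Sum>i<k. c i * g i)}"

definition ideal_prod :: "'a::comm_ring_1 set \<Rightarrow> 'a set \<Rightarrow> 'a set" where
  "ideal_prod A B = gen_ideal {a * b | a b. a \<in> A \<and> b \<in> B}"

fun ideal_pow :: "'a::comm_ring_1 set \<Rightarrow> nat \<Rightarrow> 'a set" where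
  "ideal_pow I 0 = UNIV"
| "ideal_pow I (Suc n) = ideal_prod I (ideal_pow I n)"

definition colon :: "'a::comm_ring_1 set \<Rightarrow> 'a \<Rightarrow> 'a set" where
  "colon A b = {r. r * b \<in> A}"

definition noetherian :: "'a::comm_ring_1 itself \<Rightarrow> bool" where
  "noetherian _ \<longleftrightarrow> (\<forall>A::'a set. is_ideal A \<longrightarrow> (\<exists>S. finite S \<and> A = gen_ideal S))"

definition local_ring :: "'a::comm_ring_1 set \<Rightarrow> bool" where
  "local_ring m \<longleftrightarrow> is_ideal m \<and> m \<noteq> UNIV \<and> (\<forall>A. is_ideal A \<and> A \<noteq> UNIV \<longrightarrow> A \<subseteq> m)"

definition minimal_gens :: "'a::comm_ring_1 set \<Rightarrow> nat \<Rightarrow> (nat \<Rightarrow> 'a) \<Rightarrow> 'a \<Rightarrow> bool" where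
  "minimal_gens I s x y \<longleftrightarrow> I = gen_ideal (insert y (x ` {..<s}))
     \<and> (\<forall>S. finite S \<and> gen_ideal S = I \<longrightarrow> Suc s \<le> card S)"

definition reg_seq :: "(nat \<Rightarrow> 'a::comm_ring_1) \<Rightarrow> nat \<Rightarrow> bool" where
  "reg_seq x k \<longleftrightarrow>
     (\<forall>i<k. \<forall>a. a * x i \<in> gen_ideal (x ` {..<i}) \<longrightarrow> a \<in> gen_ideal (x ` {..<i}))
     \<and> gen_ideal (x ` {..<k}) \<noteq> UNIV"

text \<open>An element of \<open>G(I) = \<Oplus> I^n/I^{n+1}\<close> is represented by a finitely supported
  family g with \<open>g n \<in> I^n\<close>; two families represent the same element iff
  \<open>g n - h n \<in> I^{n+1}\<close> for all n.\<close>
definition Gelem :: "'a::comm_ring_1 set \<Rightarrow> (nat \<Rightarrow> 'a) \<Rightarrow> bool" where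
  "Gelem I g \<longleftrightarrow> (\<forall>n. g n \<in> ideal_pow I n) \<and> finite {n. g n \<noteq> 0}"

definition Geq :: "'a::comm_ring_1 set \<Rightarrow> (nat \<Rightarrow> 'a) \<Rightarrow> (nat \<Rightarrow> 'a) \<Rightarrow> bool" where
  "Geq I g h \<longleftrightarrow> (\<forall>n. g n - h n \<in> ideal_pow I (Suc n))"

definition Gmult :: "(nat \<Rightarrow> 'a::comm_ring_1) \<Rightarrow> (nat \<Rightarrow> 'a) \<Rightarrow> nat \<Rightarrow> 'a" where
  "Gmult g h = (\<lambda>n. \<Sum>i\<le>n. g i * h (n - i))"

definition Gone :: "nat \<Rightarrow> 'a::comm_ring_1" where
  "Gone = (\<lambda>n. if n = 0 then 1 else 0)"

text \<open>Initial form \<open>x^*\<close> of \<open>x \<in> I\<close>: the class of x in \<open>I/I^2\<close>.\<close>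
definition Gstar :: "'a::comm_ring_1 \<Rightarrow> nat \<Rightarrow> 'a" where
  "Gstar a = (\<lambda>n. if n = 1 then a else 0)"

definition Gideal :: "'a::comm_ring_1 set \<Rightarrow> (nat \<Rightarrow> 'a) \<Rightarrow> nat \<Rightarrow> (nat \<Rightarrow> 'a) \<Rightarrow> bool" where
  "Gideal I x k g \<longleftrightarrow> Gelem I g \<and> (\<exists>c. (\<forall>j<k. Gelem I (c j)) \<and>
      Geq I g (\<lambda>n. \<Sum>j<k. Gmult (Gstar (x j)) (c j) n))"

definition G_reg_seq :: "'a::comm_ring_1 set \<Rightarrow> (nat \<Rightarrow> 'a) \<Rightarrow> nat \<Rightarrow> bool" where
  "G_reg_seq I x k \<longleftrightarrow>
     (\<forall>i<k. \<forall>g. Gelem I g \<longrightarrow> Gideal I x i (Gmult (Gstar (x i)) g) \<longrightarrow> Gideal I x i g)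
     \<and> \<not> Gideal I x k Gone"

text \<open>Polynomials in variables indexed by nat; variable i < s is X_i, variable s is Y.\<close>
type_synonym 'a mpoly = "(nat \<Rightarrow>\<^sub>0 nat) \<Rightarrow>\<^sub>0 'a"

definition mdeg :: "(nat \<Rightarrow>\<^sub>0 nat) \<Rightarrow> nat" where
  "mdeg mon = (\<Sum>i\<in>Poly_Mapping.keys mon. Poly_Mapping.lookup mon i)"

definition Vcarrier :: "nat \<Rightarrow> 'a::comm_ring_1 mpoly set" where
  "Vcarrier s = {F. \<forall>mon\<in>Poly_Mapping.keys F. Poly_Mapping.keys mon \<subseteq> {..s}}"

definition homog :: "nat \<Rightarrow> 'a::comm_ring_1 mpoly \<Rightarrow> bool" where
  "homog n F \<longleftrightarrow> (\<forall>mon\<in>Poly_Mapping.keys F. mdeg mon = n)"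

definition Vdeg :: "nat \<Rightarrow> nat \<Rightarrow> 'a::comm_ring_1 mpoly set" where
  "Vdeg s n = {F \<in> Vcarrier s. homog n F}"

definition Var :: "nat \<Rightarrow> 'a::comm_ring_1 mpoly" where
  "Var i = Poly_Mapping.single (Poly_Mapping.single i 1) 1"

definition Const :: "'a::comm_ring_1 \<Rightarrow> 'a mpoly" where
  "Const c = Poly_Mapping.single 0 c"

definition meval :: "(nat \<Rightarrow> 'a::comm_ring_1) \<Rightarrow> 'a mpoly \<Rightarrow> 'a" where
  "meval f F = (\<Sum>mon\<in>Poly_Mapping.keys F. Poly_Mapping.lookup F mon * (\<Prod>i\<in>Poly_Mapping.keys mon. f i ^ Poly_Mapping.lookup mon i))"

definition Vgen :: "nat \<Rightarrow> 'a::comm_ring_1 mpoly set \<Rightarrow> 'a mpoly set" where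
  "Vgen s S = {F. \<exists>(k::nat) c g. (\<forall>i<k. g i \<in> S \<and> c i \<in> Vcarrier s) \<and> F = (\<Sum>i<k. c i * g i)}"

definition gens :: "nat \<Rightarrow> (nat \<Rightarrow> 'a) \<Rightarrow> 'a \<Rightarrow> nat \<Rightarrow> 'a" where
  "gens s x y i = (if i < s then x i else y)"

text \<open>The graded R-algebra map \<open>\<phi> : V \<rightarrow> R[It] \<subseteq> R[t]\<close>, \<open>X_i \<mapsto> x_i t\<close>, \<open>Y \<mapsto> y t\<close>.\<close>
definition rees_map :: "nat \<Rightarrow> (nat \<Rightarrow> 'a::comm_ring_1) \<Rightarrow> 'a \<Rightarrow> 'a mpoly \<Rightarrow> 'a poly" where
  "rees_map s x y F = (\<Sum>mon\<in>Poly_Mapping.keys F.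
      monom (Poly_Mapping.lookup F mon * (\<Prod>i\<in>Poly_Mapping.keys mon. gens s x y i ^ Poly_Mapping.lookup mon i)) (mdeg mon))"

definition Qeq :: "nat \<Rightarrow> (nat \<Rightarrow> 'a::comm_ring_1) \<Rightarrow> 'a \<Rightarrow> 'a mpoly set" where
  "Qeq s x y = {F \<in> Vcarrier s. rees_map s x y F = 0}"

definition Qdeg :: "nat \<Rightarrow> (nat \<Rightarrow> 'a::comm_ring_1) \<Rightarrow> 'a \<Rightarrow> nat \<Rightarrow> 'a mpoly set" where
  "Qdeg s x y n = Qeq s x y \<inter> Vdeg s n"

definition Qle :: "nat \<Rightarrow> (nat \<Rightarrow> 'a::comm_ring_1) \<Rightarrow> 'a \<Rightarrow> nat \<Rightarrow> 'a mpoly set" where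
  "Qle s x y n = Vgen s (\<Union>d\<in>{..n}. Qdeg s x y d)"

definition relation_type :: "nat \<Rightarrow> (nat \<Rightarrow> 'a::comm_ring_1) \<Rightarrow> 'a \<Rightarrow> nat" where
  "relation_type s x y = (LEAST N. N \<ge> 1 \<and> Qeq s x y = Qle s x y N)"

definition is_reduction :: "'a::comm_ring_1 set \<Rightarrow> 'a set \<Rightarrow> bool" where
  "is_reduction J I \<longleftrightarrow> J \<subseteq> I \<and> (\<exists>m. ideal_pow I (Suc m) = ideal_prod J (ideal_pow I m))"

definition reduction_number :: "'a::comm_ring_1 set \<Rightarrow> 'a set \<Rightarrow> nat" where
  "reduction_number J I = (LEAST m. ideal_pow I (Suc m) = ideal_prod J (ideal_pow I m))"

end

theory Submission
  imports Defs
begin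


definition Lh :: "('a::comm_ring_1 \<Rightarrow> 'b::comm_ring_1) \<Rightarrow> ((nat \<Rightarrow>\<^sub>0 nat) \<Rightarrow> 'b) \<Rightarrow> 'a mpoly \<Rightarrow> 'b" where
  "Lh \<phi> h F = (\<Sum>mon\<in>Poly_Mapping.keys F. \<phi> (Poly_Mapping.lookup F mon) * h mon)"

lemma Lh_superset:
  assumes "finite A" "Poly_Mapping.keys F \<subseteq> A" "\<phi> 0 = 0"
  shows "Lh \<phi> h F = (\<Sum>mon\<in>A. \<phi> (Poly_Mapping.lookup F mon) * h mon)"
  unfolding Lh_def
  by (rule sum.mono_neutral_left) (use assms in \<open>auto simp: in_keys_iff\<close>)

lemma Lh_add:
  assumes "\<phi> 0 = 0" "\<And>a b. \<phi> (a + b) = \<phi> a + \<phi> b"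
  shows "Lh \<phi> h (F + G) = Lh \<phi> h F + Lh \<phi> h G"
proof -
  let ?A = "Poly_Mapping.keys F \<union> Poly_Mapping.keys G"
  have k: "Poly_Mapping.keys (F + G) \<subseteq> ?A" by (rule keys_add)
  have "Lh \<phi> h (F + G) = (\<Sum>mon\<in>?A. \<phi> (Poly_Mapping.lookup (F+G) mon) * h mon)"
    by (rule Lh_superset) (use k assms in auto)
  also have "\<dots> = (\<Sum>mon\<in>?A. \<phi> (Poly_Mapping.lookup F mon) * h mon)
     + (\<Sum>mon\<in>?A. \<phi> (Poly_Mapping.lookup G mon) * h mon)"
    by (simp add: lookup_add assms(2) distrib_right sum.distrib)
  also have "\<dots> = Lh \<phi> h F + Lh \<phi> h G"
    using Lh_superset[of ?A F \<phi> h] Lh_superset[of ?A G \<phi> h] assms by auto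
  finally show ?thesis .
qed

lemma Lh_zero [simp]: "Lh \<phi> h 0 = 0"
  by (simp add: Lh_def)

lemma Lh_sum:
  assumes "\<phi> 0 = 0" "\<And>a b. \<phi> (a + b) = \<phi> a + \<phi> b"
  shows "Lh \<phi> h (sum P S) = (\<Sum>i\<in>S. Lh \<phi> h (P i))"
  by (induction S rule: infinite_finite_induct) (auto simp: Lh_add[OF assms])

lemma Lh_single:
  assumes "\<phi> 0 = 0"
  shows "Lh \<phi> h (Poly_Mapping.single m c) = \<phi> c * h m"
  using assms by (simp add: Lh_def)

lemma pm_expand:
  "F = (\<Sum>m\<in>Poly_Mapping.keys F. Poly_Mapping.single m (Poly_Mapping.lookup F m))"
proof (rule poly_mapping_eqI)
  fix k
  show "Poly_Mapping.lookup F k =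
     Poly_Mapping.lookup (\<Sum>m\<in>Poly_Mapping.keys F. Poly_Mapping.single m (Poly_Mapping.lookup F m)) k"
    by (simp add: lookup_sum lookup_single when_def in_keys_iff sum.delta)
qed

lemma Lh_mult:
  assumes "\<phi> 0 = 0" "\<And>a b. \<phi> (a + b) = \<phi> a + \<phi> b" "\<And>a b. \<phi> (a * b) = \<phi> a * \<phi> b"
    and hm: "\<And>m1 m2. h (m1 + m2) = h m1 * h m2"
  shows "Lh \<phi> h (F * G) = Lh \<phi> h F * Lh \<phi> h G"
proof -
  have "F * G = (\<Sum>m\<in>Poly_Mapping.keys F. Poly_Mapping.single m (Poly_Mapping.lookup F m)) *
      (\<Sum>n\<in>Poly_Mapping.keys G. Poly_Mapping.single n (Poly_Mapping.lookup G n))"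
    using pm_expand[of F] pm_expand[of G] by simp
  also have "\<dots> = (\<Sum>m\<in>Poly_Mapping.keys F. \<Sum>n\<in>Poly_Mapping.keys G.
        Poly_Mapping.single (m + n) (Poly_Mapping.lookup F m * Poly_Mapping.lookup G n))"
    by (simp add: sum_product mult_single)
  finally have e: "F * G = \<dots>" .
  have "Lh \<phi> h (F * G) = (\<Sum>m\<in>Poly_Mapping.keys F. \<Sum>n\<in>Poly_Mapping.keys G.
        (\<phi> (Poly_Mapping.lookup F m) * h m) * (\<phi> (Poly_Mapping.lookup G n) * h n))"
    unfolding e by (simp add: Lh_sum[OF assms(1,2)] Lh_single assms(1) assms(3) hm mult_ac)
  also have "\<dots> = Lh \<phi> h F * Lh \<phi> h G"
    by (simp add: Lh_def sum_product)
  finally show ?thesis .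
qed

definition mono :: "(nat \<Rightarrow> 'a::comm_ring_1) \<Rightarrow> (nat \<Rightarrow>\<^sub>0 nat) \<Rightarrow> 'a" where
  "mono f mon = (\<Prod>i\<in>Poly_Mapping.keys mon. f i ^ Poly_Mapping.lookup mon i)"

lemma mono_superset:
  assumes "finite A" "Poly_Mapping.keys mon \<subseteq> A"
  shows "mono f mon = (\<Prod>i\<in>A. f i ^ Poly_Mapping.lookup mon i)"
  unfolding mono_def
  by (rule prod.mono_neutral_left) (use assms in \<open>auto simp: in_keys_iff\<close>)

lemma mono_add: "mono f (m1 + m2) = mono f m1 * mono f m2"
proof -
  let ?A = "Poly_Mapping.keys m1 \<union> Poly_Mapping.keys m2"
  have "mono f (m1 + m2) = (\<Prod>i\<in>?A. f i ^ Poly_Mapping.lookup (m1+m2) i)"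
    by (rule mono_superset) (auto dest: subsetD[OF keys_add])
  also have "\<dots> = (\<Prod>i\<in>?A. f i ^ Poly_Mapping.lookup m1 i) * (\<Prod>i\<in>?A. f i ^ Poly_Mapping.lookup m2 i)"
    by (simp add: lookup_add power_add prod.distrib)
  also have "\<dots> = mono f m1 * mono f m2"
    using mono_superset[of ?A m1 f] mono_superset[of ?A m2 f] by auto
  finally show ?thesis .
qed

lemma mono_zero [simp]: "mono f 0 = 1" by (simp add: mono_def)

lemma mdeg_superset:
  assumes "finite A" "Poly_Mapping.keys mon \<subseteq> A"
  shows "mdeg mon = (\<Sum>i\<in>A. Poly_Mapping.lookup mon i)"
  unfolding mdeg_def
  by (rule sum.mono_neutral_left) (use assms in \<open>auto simp: in_keys_iff\<close>)

lemma mdeg_add: "mdeg (m1 + m2) = mdeg m1 + mdeg m2"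
proof -
  let ?A = "Poly_Mapping.keys m1 \<union> Poly_Mapping.keys m2"
  have "mdeg (m1 + m2) = (\<Sum>i\<in>?A. Poly_Mapping.lookup (m1+m2) i)"
    by (rule mdeg_superset) (auto dest: subsetD[OF keys_add])
  also have "\<dots> = (\<Sum>i\<in>?A. Poly_Mapping.lookup m1 i) + (\<Sum>i\<in>?A. Poly_Mapping.lookup m2 i)"
    by (simp add: lookup_add sum.distrib)
  also have "\<dots> = mdeg m1 + mdeg m2"
    using mdeg_superset[of ?A m1] mdeg_superset[of ?A m2] by auto
  finally show ?thesis .
qed

lemma mdeg_zero [simp]: "mdeg 0 = 0" by (simp add: mdeg_def)
lemma mdeg_single [simp]: "mdeg (Poly_Mapping.single i k) = k" by (simp add: mdeg_def)

lemma meval_Lh: "meval f F = Lh id (mono f) F"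
  by (simp add: meval_def Lh_def mono_def)

lemma meval_add: "meval f (F + G) = meval f F + meval f G"
  unfolding meval_Lh by (rule Lh_add) auto

lemma meval_mult: "meval f (F * G) = meval f F * meval f G"
  unfolding meval_Lh by (rule Lh_mult) (auto simp: mono_add)

lemma meval_zero [simp]: "meval f 0 = 0" by (simp add: meval_Lh)

lemma meval_sum: "meval f (sum P S) = (\<Sum>i\<in>S. meval f (P i))"
  unfolding meval_Lh by (rule Lh_sum) auto

lemma meval_minus: "meval f (F - G) = meval f F - meval f G"
  using meval_add[of f "F - G" G] by (simp add: algebra_simps)

lemma meval_single: "meval f (Poly_Mapping.single m c) = c * mono f m"
  unfolding meval_Lh by (simp add: Lh_single)

lemma meval_Const [simp]: "meval f (Const c) = c"
  by (simp add: Const_def meval_single)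

lemma meval_Var [simp]: "meval f (Var i) = f i"
  by (simp add: Var_def meval_single mono_def)

lemma meval_one [simp]: "meval f 1 = 1"
  by (metis Const_def single_one meval_Const)

lemma meval_pow: "meval f (F ^ n) = meval f F ^ n"
  by (induction n) (auto simp: meval_mult)


lemma rees_Lh: "rees_map s x y F =
   Lh (\<lambda>c. monom c 0) (\<lambda>mon. monom (mono (gens s x y) mon) (mdeg mon)) F"
  by (simp add: rees_map_def Lh_def mono_def mult_monom)

lemma rees_add: "rees_map s x y (F + G) = rees_map s x y F + rees_map s x y G"
  unfolding rees_Lh by (rule Lh_add) (auto simp: add_monom)

lemma rees_mult: "rees_map s x y (F * G) = rees_map s x y F * rees_map s x y G"
  unfolding rees_Lh by (rule Lh_mult) (auto simp: add_monom mult_monom mono_add mdeg_add)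

lemma rees_zero [simp]: "rees_map s x y 0 = 0" by (simp add: rees_Lh)


lemma Vc_iff: "F \<in> Vcarrier s \<longleftrightarrow> (\<forall>mon\<in>Poly_Mapping.keys F. Poly_Mapping.keys mon \<subseteq> {..s})"
  by (simp add: Vcarrier_def)

lemma Vdeg_iff: "F \<in> Vdeg s n \<longleftrightarrow> (\<forall>mon\<in>Poly_Mapping.keys F. Poly_Mapping.keys mon \<subseteq> {..s} \<and> mdeg mon = n)"
  by (auto simp: Vdeg_def Vcarrier_def homog_def)

lemma keys_mon_add: "Poly_Mapping.keys ((a::nat \<Rightarrow>\<^sub>0 nat) + b) = Poly_Mapping.keys a \<union> Poly_Mapping.keys b"
  by (auto simp: in_keys_iff lookup_add)

lemma Vc_sub: "Poly_Mapping.keys H \<subseteq> Poly_Mapping.keys F \<union> Poly_Mapping.keys G \<Longrightarrow>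
   F \<in> Vcarrier s \<Longrightarrow> G \<in> Vcarrier s \<Longrightarrow> H \<in> Vcarrier s"
  unfolding Vc_iff by (meson UnE subsetD)

lemma Vc_add: "F \<in> Vcarrier s \<Longrightarrow> G \<in> Vcarrier s \<Longrightarrow> F + G \<in> Vcarrier s"
  by (rule Vc_sub[OF keys_add])

lemma Vc_diff: "F \<in> Vcarrier s \<Longrightarrow> G \<in> Vcarrier s \<Longrightarrow> F - G \<in> Vcarrier s"
  by (rule Vc_sub[OF keys_diff])

lemma keys_mult_E:
  assumes "mon \<in> Poly_Mapping.keys (F * G)"
  obtains a b where "mon = a + b" "a \<in> Poly_Mapping.keys F" "b \<in> Poly_Mapping.keys G"
  using keys_mult[of F G] assms by blast

lemma Vc_mult: "F \<in> Vcarrier s \<Longrightarrow> G \<in> Vcarrier s \<Longrightarrow> F * G \<in> Vcarrier s"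
  unfolding Vc_iff
proof
  fix mon assume F: "\<forall>mon\<in>Poly_Mapping.keys F. Poly_Mapping.keys mon \<subseteq> {..s}"
    and G: "\<forall>mon\<in>Poly_Mapping.keys G. Poly_Mapping.keys mon \<subseteq> {..s}"
    and m: "mon \<in> Poly_Mapping.keys (F * G)"
  from m obtain a b where "mon = a + b" "a \<in> Poly_Mapping.keys F" "b \<in> Poly_Mapping.keys G"
    by (rule keys_mult_E)
  then show "Poly_Mapping.keys mon \<subseteq> {..s}" using F G by (simp add: keys_mon_add)
qed

lemma Vc_zero [simp]: "0 \<in> Vcarrier s" by (simp add: Vc_iff)
lemma Vc_one [simp]: "1 \<in> Vcarrier s" by (simp add: Vc_iff)
lemma Vc_Const [simp]: "Const c \<in> Vcarrier s" by (simp add: Vc_iff Const_def)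
lemma Vc_Var: "i \<le> s \<Longrightarrow> Var i \<in> Vcarrier s" by (simp add: Vc_iff Var_def)

lemma Vc_sum: "(\<And>i. i \<in> A \<Longrightarrow> P i \<in> Vcarrier s) \<Longrightarrow> sum P A \<in> Vcarrier s"
  by (induction A rule: infinite_finite_induct) (auto intro: Vc_add)

lemma Vc_pow: "F \<in> Vcarrier s \<Longrightarrow> F ^ n \<in> Vcarrier s"
  by (induction n) (auto intro: Vc_mult)

lemma Vd_sub: "Poly_Mapping.keys H \<subseteq> Poly_Mapping.keys F \<union> Poly_Mapping.keys G \<Longrightarrow>
   F \<in> Vdeg s n \<Longrightarrow> G \<in> Vdeg s n \<Longrightarrow> H \<in> Vdeg s n"
  unfolding Vdeg_iff by (meson UnE subsetD)

lemma Vd_add: "F \<in> Vdeg s n \<Longrightarrow> G \<in> Vdeg s n \<Longrightarrow> F + G \<in> Vdeg s n"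
  by (rule Vd_sub[OF keys_add])

lemma Vd_diff: "F \<in> Vdeg s n \<Longrightarrow> G \<in> Vdeg s n \<Longrightarrow> F - G \<in> Vdeg s n"
  by (rule Vd_sub[OF keys_diff])

lemma Vd_mult: "F \<in> Vdeg s n \<Longrightarrow> G \<in> Vdeg s m \<Longrightarrow> F * G \<in> Vdeg s (n + m)"
  unfolding Vdeg_iff
proof
  fix mon assume F: "\<forall>mon\<in>Poly_Mapping.keys F. Poly_Mapping.keys mon \<subseteq> {..s} \<and> mdeg mon = n"
    and G: "\<forall>mon\<in>Poly_Mapping.keys G. Poly_Mapping.keys mon \<subseteq> {..s} \<and> mdeg mon = m"
    and mm: "mon \<in> Poly_Mapping.keys (F * G)"
  from mm obtain a b where "mon = a + b" "a \<in> Poly_Mapping.keys F" "b \<in> Poly_Mapping.keys G"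
    by (rule keys_mult_E)
  then show "Poly_Mapping.keys mon \<subseteq> {..s} \<and> mdeg mon = n + m" using F G by (simp add: keys_mon_add mdeg_add)
qed

lemma Vd_zero [simp]: "0 \<in> Vdeg s n" by (simp add: Vdeg_iff)
lemma Vd_Const [simp]: "Const c \<in> Vdeg s 0" by (simp add: Vdeg_iff Const_def)
lemma Vd_Var: "i \<le> s \<Longrightarrow> Var i \<in> Vdeg s 1" by (simp add: Vdeg_iff Var_def)

lemma Vd_sum: "(\<And>i. i \<in> A \<Longrightarrow> P i \<in> Vdeg s n) \<Longrightarrow> sum P A \<in> Vdeg s n"
  by (induction A rule: infinite_finite_induct) (auto intro: Vd_add)

lemma Vd_pow: "F \<in> Vdeg s 1 \<Longrightarrow> F ^ n \<in> Vdeg s n"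
proof (induction n)
  case 0 then show ?case using Vd_Const[of 1 s] by (simp add: Const_def)
next
  case (Suc n) then show ?case using Vd_mult[of F s 1 "F^n" n] by simp
qed

lemma Vd_Vc: "F \<in> Vdeg s n \<Longrightarrow> F \<in> Vcarrier s" by (simp add: Vdeg_def)

lemma Vd_ConstMult: "F \<in> Vdeg s n \<Longrightarrow> Const c * F \<in> Vdeg s n"
  using Vd_mult[of "Const c" s 0 F n] by simp

lemma Vd_VarMult: "i \<le> s \<Longrightarrow> F \<in> Vdeg s n \<Longrightarrow> Var i * F \<in> Vdeg s (Suc n)"
  using Vd_mult[OF Vd_Var] by fastforce

lemma mdeg_eq0: "mdeg mon = 0 \<Longrightarrow> mon = 0"
proof -
  assume "mdeg mon = 0"
  then have "\<forall>i\<in>Poly_Mapping.keys mon. Poly_Mapping.lookup mon i = 0"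
    unfolding mdeg_def by simp
  then have "\<forall>i. Poly_Mapping.lookup mon i = 0" by (metis in_keys_iff)
  then show ?thesis by (intro poly_mapping_eqI) simp
qed

lemma Vd0: "F \<in> Vdeg s 0 \<Longrightarrow> F = Const (meval f F)"
proof -
  assume a: "F \<in> Vdeg s 0"
  then have k: "Poly_Mapping.keys F \<subseteq> {0}" by (auto simp: Vdeg_iff dest: mdeg_eq0)
  have "F = (\<Sum>m\<in>Poly_Mapping.keys F. Poly_Mapping.single m (Poly_Mapping.lookup F m))"
    by (rule pm_expand)
  also have "\<dots> = (\<Sum>m\<in>{0}. Poly_Mapping.single m (Poly_Mapping.lookup F m))"
    by (rule sum.mono_neutral_left) (use k in \<open>auto simp: in_keys_iff\<close>)
  finally have e: "F = Const (Poly_Mapping.lookup F 0)" by (simp add: Const_def)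
  have "meval f F = Poly_Mapping.lookup F 0"
    by (subst e) simp
  then show ?thesis using e by simp
qed

lemma meval_Var_mult_pow: "meval f (Var i ^ n) = f i ^ n"
  by (simp add: meval_pow)



lemma Vd_decomp:
  assumes F: "F \<in> Vdeg s (Suc n)"
  shows "\<exists>K. (\<forall>i\<le>s. K i \<in> Vdeg s n) \<and> F = (\<Sum>i\<le>s. Var i * K i)"
proof -
  define ch where "ch mon = Min (Poly_Mapping.keys (mon::nat\<Rightarrow>\<^sub>0nat))" for mon
  have chk: "ch mon \<in> Poly_Mapping.keys mon" "ch mon \<le> s" if "mon \<in> Poly_Mapping.keys F" for mon
  proof -
    from F that have km: "Poly_Mapping.keys mon \<subseteq> {..s}" "mdeg mon = Suc n" by (auto simp: Vdeg_iff)
    then have "Poly_Mapping.keys mon \<noteq> {}" by (auto simp: mdeg_def)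
    then show "ch mon \<in> Poly_Mapping.keys mon" unfolding ch_def by (simp add: Min_in)
    then show "ch mon \<le> s" using km by auto
  qed
  define rest where "rest mon = mon - Poly_Mapping.single (ch mon) (1::nat)" for mon
  have split: "mon = Poly_Mapping.single (ch mon) 1 + rest mon" if "mon \<in> Poly_Mapping.keys F" for mon
  proof (rule poly_mapping_eqI)
    fix k
    have "Poly_Mapping.lookup mon (ch mon) \<ge> 1" using chk(1)[OF that] by (simp add: in_keys_iff)
    then show "Poly_Mapping.lookup mon k = Poly_Mapping.lookup (Poly_Mapping.single (ch mon) 1 + rest mon) k"
      by (auto simp: rest_def lookup_add lookup_minus lookup_single when_def)
  qed
  have restd: "Poly_Mapping.keys (rest mon) \<subseteq> {..s} \<and> mdeg (rest mon) = n" if "mon \<in> Poly_Mapping.keys F" for mon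
  proof -
    from F that have km: "Poly_Mapping.keys mon \<subseteq> {..s}" "mdeg mon = Suc n" by (auto simp: Vdeg_iff)
    have "mdeg mon = mdeg (Poly_Mapping.single (ch mon) 1 + rest mon)" using arg_cong[OF split[OF that], of mdeg] .
    then have d1: "mdeg mon = 1 + mdeg (rest mon)" by (simp only: mdeg_add mdeg_single)
    have "Poly_Mapping.keys mon = Poly_Mapping.keys (Poly_Mapping.single (ch mon) 1 + rest mon)"
      using arg_cong[OF split[OF that], of Poly_Mapping.keys] .
    also have "\<dots> = Poly_Mapping.keys (Poly_Mapping.single (ch mon) (1::nat)) \<union> Poly_Mapping.keys (rest mon)"
      by (rule keys_mon_add)
    finally have "Poly_Mapping.keys (rest mon) \<subseteq> Poly_Mapping.keys mon" by blast
    then show ?thesis using km d1 by auto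
  qed
  define K where "K i = (\<Sum>mon\<in>{m\<in>Poly_Mapping.keys F. ch m = i}.
       Poly_Mapping.single (rest mon) (Poly_Mapping.lookup F mon))" for i
  have "K i \<in> Vdeg s n" for i
    unfolding K_def by (rule Vd_sum) (use restd in \<open>auto simp: Vdeg_iff\<close>)
  moreover have "F = (\<Sum>i\<le>s. Var i * K i)"
  proof -
    have "(\<Sum>i\<le>s. Var i * K i) = (\<Sum>i\<le>s. \<Sum>mon\<in>{m\<in>Poly_Mapping.keys F. ch m = i}.
         Poly_Mapping.single mon (Poly_Mapping.lookup F mon))"
    proof (rule sum.cong[OF refl])
      fix i
      show "Var i * K i = (\<Sum>mon\<in>{m\<in>Poly_Mapping.keys F. ch m = i}.
         Poly_Mapping.single mon (Poly_Mapping.lookup F mon))"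
        unfolding K_def sum_distrib_left
        by (rule sum.cong[OF refl]) (use split in \<open>auto simp: Var_def mult_single\<close>)
    qed
    also have "\<dots> = (\<Sum>mon\<in>Poly_Mapping.keys F. Poly_Mapping.single mon (Poly_Mapping.lookup F mon))"
      by (rule sum.group) (use chk in auto)
    also have "\<dots> = F" by (rule pm_expand[symmetric])
    finally show ?thesis by simp
  qed
  ultimately show ?thesis by (intro exI[of _ K]) simp
qed



definition ev1 :: "nat \<Rightarrow> nat \<Rightarrow> 'a::comm_ring_1" where
  "ev1 s = (\<lambda>i. if i < s then 0 else 1)"

lemma ev1_lin: "meval (ev1 s) (\<Sum>i<s. Var i * K i) = 0"
  by (auto simp: meval_sum meval_mult ev1_def intro!: sum.neutral)

lemma ev1_s [simp]: "ev1 s s = 1"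
  by (simp add: ev1_def)

lemma sum_atMost_split: "(\<Sum>i\<le>(s::nat). f i) = f s + (\<Sum>i<s. f i)"
proof -
  have "{..s} = insert s {..<s}" by auto
  then show ?thesis by (simp add: sum.insert)
qed

lemma Vd_decomp2:
  assumes "F \<in> Vdeg s (Suc n)"
  shows "\<exists>K. (\<forall>i<s. K i \<in> Vdeg s n) \<and>
     F = Const (meval (ev1 s) F) * Var s ^ Suc n + (\<Sum>i<s. Var i * K i)"
  using assms
proof (induction n arbitrary: F)
  case 0
  obtain K where K: "\<forall>i\<le>s. K i \<in> Vdeg s 0" "F = (\<Sum>i\<le>s. Var i * K i)"
    using Vd_decomp[OF 0] by blast
  have F: "F = Var s * K s + (\<Sum>i<s. Var i * K i)"
    using K(2) sum_atMost_split[of "\<lambda>i. Var i * K i" s] by (simp only:)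
  have Ks: "K s = Const (meval (ev1 s) (K s))" by (rule Vd0[of _ s]) (use K(1) in simp)
  have e: "meval (ev1 s) F = meval (ev1 s) (K s)"
    using arg_cong[OF F, of "meval (ev1 s)"] by (simp add: meval_add meval_mult ev1_lin)
  show ?case
  proof (intro exI[of _ K] conjI)
    show "\<forall>i<s. K i \<in> Vdeg s 0" using K(1) by simp
    show "F = Const (meval (ev1 s) F) * Var s ^ Suc 0 + (\<Sum>i<s. Var i * K i)"
      unfolding e
    proof -
      define m where "m = meval (ev1 s) (K s)"
      have Km: "K s = Const m" using Ks unfolding m_def[symmetric] .
      show "F = Const m * Var s ^ Suc 0 + (\<Sum>i<s. Var i * K i)"
        using F unfolding Km by (simp add: mult.commute)
    qed
  qed
next
  case (Suc n)
  obtain K where K: "\<forall>i\<le>s. K i \<in> Vdeg s (Suc n)" "F = (\<Sum>i\<le>s. Var i * K i)"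
    using Vd_decomp[OF Suc.prems] by blast
  have F: "F = Var s * K s + (\<Sum>i<s. Var i * K i)"
    using K(2) sum_atMost_split[of "\<lambda>i. Var i * K i" s] by (simp only:)
  obtain K' where K': "\<forall>i<s. K' i \<in> Vdeg s n"
    "K s = Const (meval (ev1 s) (K s)) * Var s ^ Suc n + (\<Sum>i<s. Var i * K' i)"
    using Suc.IH[of "K s"] K(1) by auto
  define c where "c = meval (ev1 s) (K s)"
  have VK: "Var s * K s = Const c * Var s ^ Suc (Suc n) + (\<Sum>i<s. Var i * (Var s * K' i))"
  proof -
    have "Var s * K s = Var s * (Const c * Var s ^ Suc n + (\<Sum>i<s. Var i * K' i))"
      using K'(2) unfolding c_def[symmetric] by (rule arg_cong)
    also have "\<dots> = Const c * Var s ^ Suc (Suc n) + (\<Sum>i<s. Var s * (Var i * K' i))"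
      by (simp only: distrib_left sum_distrib_left power_Suc mult.left_commute)
    also have "\<dots> = Const c * Var s ^ Suc (Suc n) + (\<Sum>i<s. Var i * (Var s * K' i))"
      by (simp only: mult.left_commute)
    finally show ?thesis .
  qed
  have F2: "F = Const c * Var s ^ Suc (Suc n) + (\<Sum>i<s. Var i * (K i + Var s * K' i))"
  proof -
    have "F = Const c * Var s ^ Suc (Suc n) + ((\<Sum>i<s. Var i * (Var s * K' i)) + (\<Sum>i<s. Var i * K i))"
      using F VK by (simp only: add.assoc)
    also have "(\<Sum>i<s. Var i * (Var s * K' i)) + (\<Sum>i<s. Var i * K i) = (\<Sum>i<s. Var i * (K i + Var s * K' i))"
      by (simp only: sum.distrib[symmetric] distrib_left[symmetric] add.commute)
    finally show ?thesis .
  qed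
  have e: "meval (ev1 s) F = c"
    using arg_cong[OF F2, of "meval (ev1 s)"] by (simp add: meval_add meval_mult meval_pow ev1_lin)
  show ?case
  proof (intro exI[of _ "\<lambda>i. K i + Var s * K' i"] conjI)
    show "F = Const (meval (ev1 s) F) * Var s ^ Suc (Suc n) + (\<Sum>i<s. Var i * (K i + Var s * K' i))"
      unfolding e by (rule F2)
    show "\<forall>i<s. K i + Var s * K' i \<in> Vdeg s (Suc n)"
      using K(1) K'(1) by (auto intro!: Vd_add Vd_VarMult)
  qed
qed


lemma sum_concat: "(\<Sum>i<(k::nat)+k'. f i) = (\<Sum>i<k. f i) + (\<Sum>i<k'. f (k + i))"
  by (induction k') (simp_all add: add.assoc)

lemma is_idealD:
  assumes "is_ideal A"
  shows "0 \<in> A" "a \<in> A \<Longrightarrow> b \<in> A \<Longrightarrow> a + b \<in> A" "a \<in> A \<Longrightarrow> r * a \<in> A"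
  using assms unfolding is_ideal_def by blast+

lemma ideal_mult_right: "is_ideal A \<Longrightarrow> a \<in> A \<Longrightarrow> a * r \<in> A"
  using is_idealD(3)[of A a r] by (simp add: mult.commute)

lemma ideal_uminus: "is_ideal A \<Longrightarrow> a \<in> A \<Longrightarrow> - a \<in> A"
  using is_idealD(3)[of A a "-1"] by simp

lemma ideal_diff: "is_ideal A \<Longrightarrow> a \<in> A \<Longrightarrow> b \<in> A \<Longrightarrow> a - b \<in> A"
  using is_idealD(2)[of A a "-b"] ideal_uminus[of A b] by simp

lemma ideal_sum: "is_ideal A \<Longrightarrow> (\<And>i. i \<in> T \<Longrightarrow> f i \<in> A) \<Longrightarrow> sum f T \<in> A"
  by (induction T rule: infinite_finite_induct) (auto intro: is_idealD)

lemma is_ideal_UNIV [simp]: "is_ideal UNIV" by (simp add: is_ideal_def)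

lemma giI: "(\<forall>i<k. g i \<in> S) \<Longrightarrow> a = (\<Sum>i<(k::nat). c i * g i) \<Longrightarrow> a \<in> gen_ideal S"
  unfolding gen_ideal_def by blast

lemma giE: "a \<in> gen_ideal S \<Longrightarrow> (\<And>(k::nat) c g. \<forall>i<k. g i \<in> S \<Longrightarrow> a = (\<Sum>i<k. c i * g i) \<Longrightarrow> P) \<Longrightarrow> P"
  unfolding gen_ideal_def by blast

lemma gi_ideal: "is_ideal (gen_ideal S)"
  unfolding is_ideal_def
proof (intro conjI ballI allI)
  show "0 \<in> gen_ideal S" by (rule giI[of 0]) auto
next
  fix a b assume ha: "a \<in> gen_ideal S" and hb: "b \<in> gen_ideal S"
  obtain k :: nat and c g where a: "\<forall>i<k. g i \<in> S" "a = (\<Sum>i<k. c i * g i)"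
    by (rule giE[OF ha])
  obtain k' :: nat and c' g' where b: "\<forall>i<k'. g' i \<in> S" "b = (\<Sum>i<k'. c' i * g' i)"
    by (rule giE[OF hb])
  define C where "C i = (if i < k then c i else c' (i - k))" for i
  define G where "G i = (if i < k then g i else g' (i - k))" for i
  have e: "a + b = (\<Sum>i<k+k'. C i * G i)"
    unfolding sum_concat by (simp add: a(2) b(2) C_def G_def)
  have "\<forall>i<k+k'. G i \<in> S" using a(1) b(1) by (auto simp: G_def)
  then show "a + b \<in> gen_ideal S" using e by (rule giI)
next
  fix r a assume ha: "a \<in> gen_ideal S"
  obtain k :: nat and c g where a: "\<forall>i<k. g i \<in> S" "a = (\<Sum>i<k. c i * g i)"
    by (rule giE[OF ha])
  have "r * a = (\<Sum>i<k. (r * c i) * g i)" by (simp add: a(2) sum_distrib_left mult.assoc)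
  with a(1) show "r * a \<in> gen_ideal S" by (rule giI)
qed

lemma gi_base: "u \<in> S \<Longrightarrow> u \<in> gen_ideal S"
  unfolding gen_ideal_def
  by (rule CollectI, rule exI[of _ 1], rule exI[of _ "\<lambda>_. 1"], rule exI[of _ "\<lambda>_. u"]) simp

lemma gi_least: "S \<subseteq> A \<Longrightarrow> is_ideal A \<Longrightarrow> gen_ideal S \<subseteq> A"
  unfolding gen_ideal_def by (auto intro!: ideal_sum is_idealD(3))

lemma gi_mult_closed:
  assumes "p \<in> gen_ideal S" "\<And>u. u \<in> S \<Longrightarrow> u * q \<in> A" "is_ideal A"
  shows "p * q \<in> A"
proof -
  obtain k :: nat and c g where a: "\<forall>i<k. g i \<in> S" "p = (\<Sum>i<k. c i * g i)"
    by (rule giE[OF assms(1)])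
  have "p * q = (\<Sum>i<k. c i * (g i * q))" by (simp add: a sum_distrib_right mult.assoc)
  also have "\<dots> \<in> A"
    by (rule ideal_sum[OF assms(3)], rule is_idealD(3)[OF assms(3)]) (use a(1) assms(2) in auto)
  finally show ?thesis .
qed

lemma ip_ideal: "is_ideal (ideal_prod A B)"
  unfolding ideal_prod_def by (rule gi_ideal)

lemma ip_mem: "a \<in> A \<Longrightarrow> b \<in> B \<Longrightarrow> a * b \<in> ideal_prod A B"
  unfolding ideal_prod_def by (rule gi_base) blast

lemma ip_least: "(\<And>a b. a \<in> A \<Longrightarrow> b \<in> B \<Longrightarrow> a * b \<in> C) \<Longrightarrow> is_ideal C \<Longrightarrow> ideal_prod A B \<subseteq> C"
  unfolding ideal_prod_def by (rule gi_least) auto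

lemma ipow_ideal: "is_ideal (ideal_pow I n)"
  by (cases n) (auto intro: ip_ideal)

lemma ipow_mult:
  assumes I: "is_ideal I"
  shows "a \<in> ideal_pow I p \<Longrightarrow> b \<in> ideal_pow I q \<Longrightarrow> a * b \<in> ideal_pow I (p + q)"
proof (induction p arbitrary: a)
  case 0 then show ?case using is_idealD(3)[OF ipow_ideal] by simp
next
  case (Suc p)
  have "a * b \<in> ideal_prod I (ideal_pow I (p + q))"
  proof (rule gi_mult_closed[of a])
    show "a \<in> gen_ideal {u * v |u v. u \<in> I \<and> v \<in> ideal_pow I p}"
      using Suc.prems(1) by (simp add: ideal_prod_def)
    show "is_ideal (ideal_prod I (ideal_pow I (p + q)))" by (rule ip_ideal)
    fix w assume "w \<in> {u * v |u v. u \<in> I \<and> v \<in> ideal_pow I p}"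
    then obtain u v where "w = u * v" "u \<in> I" "v \<in> ideal_pow I p" by blast
    then show "w * b \<in> ideal_prod I (ideal_pow I (p + q))"
      using Suc.IH[of v] Suc.prems(2) ip_mem[of u I "v * b"] by (simp add: mult.assoc)
  qed
  then show ?case by simp
qed

lemma ipow_Suc_sub: "is_ideal I \<Longrightarrow> ideal_pow I (Suc n) \<subseteq> ideal_pow I n"
  by (simp, rule ip_least) (auto intro: is_idealD(3) ipow_ideal)

lemma ipow_anti: "is_ideal I \<Longrightarrow> m \<le> n \<Longrightarrow> ideal_pow I n \<subseteq> ideal_pow I m"
proof (induction n)
  case 0 then show ?case by simp
next
  case (Suc n) then show ?case
    using ipow_Suc_sub[OF Suc.prems(1), of n] by (cases "m = Suc n") auto
qed

lemma ipow_elem: "is_ideal I \<Longrightarrow> a \<in> I \<Longrightarrow> a ^ n \<in> ideal_pow I n"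
  by (induction n) (auto intro: ip_mem)

lemma ipow_one: "is_ideal I \<Longrightarrow> ideal_pow I 1 = I"
proof
  assume I: "is_ideal I"
  show "ideal_pow I 1 \<subseteq> I" by (simp, rule ip_least) (auto intro: ideal_mult_right I)
  show "I \<subseteq> ideal_pow I 1" using ip_mem[of _ I 1 UNIV] by auto
qed

definition lc :: "(nat \<Rightarrow> 'a::comm_ring_1) \<Rightarrow> nat \<Rightarrow> 'a set \<Rightarrow> 'a set" where
  "lc x k A = {a. \<exists>e. (\<forall>i<k. e i \<in> A) \<and> a = (\<Sum>i<k. x i * e i)}"

lemma lcI: "(\<And>i. i < k \<Longrightarrow> e i \<in> A) \<Longrightarrow> (\<Sum>i<k. x i * e i) \<in> lc x k A"
  unfolding lc_def by blast

lemma lcE: "a \<in> lc x k A \<Longrightarrow> (\<And>e. (\<forall>i<k. e i \<in> A) \<Longrightarrow> a = (\<Sum>i<k. x i * e i) \<Longrightarrow> P) \<Longrightarrow> P"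
  unfolding lc_def by blast

lemma lc_ideal:
  assumes A: "is_ideal A"
  shows "is_ideal (lc x k A)"
  unfolding is_ideal_def
proof (intro conjI ballI allI)
  show "0 \<in> lc x k A" using lcI[of k "\<lambda>_. 0" A x] is_idealD(1)[OF A] by simp
next
  fix a b assume a: "a \<in> lc x k A" and b: "b \<in> lc x k A"
  obtain e where "\<forall>i<k. e i \<in> A" "a = (\<Sum>i<k. x i * e i)" by (rule lcE[OF a])
  moreover obtain e' where "\<forall>i<k. e' i \<in> A" "b = (\<Sum>i<k. x i * e' i)" by (rule lcE[OF b])
  ultimately show "a + b \<in> lc x k A"
    using lcI[of k "\<lambda>i. e i + e' i" A x] is_idealD(2)[OF A]
    by (simp add: distrib_left sum.distrib)
next
  fix r a assume "a \<in> lc x k A"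
  then obtain e where "\<forall>i<k. e i \<in> A" "a = (\<Sum>i<k. x i * e i)" by (erule lcE)
  then show "r * a \<in> lc x k A"
    using lcI[of k "\<lambda>i. r * e i" A x] is_idealD(3)[OF A]
    by (simp add: sum_distrib_left mult.left_commute)
qed

lemma lc_gen: "i < k \<Longrightarrow> b \<in> A \<Longrightarrow> is_ideal A \<Longrightarrow> x i * b \<in> lc x k A"
proof -
  assume a: "i < k" "b \<in> A" "is_ideal A"
  have "(\<Sum>j<k. x j * (if j = i then b else 0)) = x i * b"
    using a(1) by (simp add: if_distrib sum.delta cong: if_cong)
  moreover have "(\<Sum>j<k. x j * (if j = i then b else 0)) \<in> lc x k A"
    by (rule lcI) (use a is_idealD(1) in auto)
  ultimately show ?thesis by simp
qed

lemma ip_lc: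
  assumes A: "is_ideal A"
  shows "ideal_prod (gen_ideal (x ` {..<k})) A = lc x k A"
proof
  show "ideal_prod (gen_ideal (x ` {..<k})) A \<subseteq> lc x k A"
  proof (rule ip_least[OF _ lc_ideal[OF A]])
    fix a b assume ab: "a \<in> gen_ideal (x ` {..<k})" "b \<in> A"
    show "a * b \<in> lc x k A"
      by (rule gi_mult_closed[OF ab(1) _ lc_ideal[OF A]]) (use ab(2) A lc_gen in auto)
  qed
  show "lc x k A \<subseteq> ideal_prod (gen_ideal (x ` {..<k})) A"
  proof
    fix a assume "a \<in> lc x k A"
    then obtain e where e: "\<forall>i<k. e i \<in> A" "a = (\<Sum>i<k. x i * e i)" by (erule lcE)
    show "a \<in> ideal_prod (gen_ideal (x ` {..<k})) A"
      unfolding e(2) by (rule ideal_sum[OF ip_ideal]) (use e(1) in \<open>auto intro!: ip_mem gi_base\<close>)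
  qed
qed

lemma gi_lc: "gen_ideal (x ` {..<k}) = lc x k UNIV"
proof
  show "gen_ideal (x ` {..<k}) \<subseteq> lc x k UNIV"
    by (rule gi_least) (use lc_gen[of _ k 1 UNIV x] lc_ideal[of UNIV] in auto)
  show "lc x k UNIV \<subseteq> gen_ideal (x ` {..<k})"
  proof
    fix a assume "a \<in> lc x k UNIV"
    then obtain e where e: "\<forall>i<k. e i \<in> UNIV" "a = (\<Sum>i<k. x i * e i)" by (erule lcE)
    show "a \<in> gen_ideal (x ` {..<k})"
      unfolding e(2) by (intro ideal_sum[OF gi_ideal] ideal_mult_right[OF gi_ideal] gi_base) auto
  qed
qed

lemma lc_mono: "A \<subseteq> B \<Longrightarrow> lc x k A \<subseteq> lc x k B"
  unfolding lc_def by blast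

lemma lc_Suc_I: "c \<in> lc x k A \<Longrightarrow> b \<in> A \<Longrightarrow> c + x k * b \<in> lc x (Suc k) A"
proof -
  assume "c \<in> lc x k A" "b \<in> A"
  from \<open>c \<in> lc x k A\<close> obtain e where e: "\<forall>i<k. e i \<in> A" "c = (\<Sum>i<k. x i * e i)" by (erule lcE)
  have "c + x k * b = (\<Sum>i<Suc k. x i * (if i < k then e i else b))"
    by (simp add: e(2))
  also have "\<dots> \<in> lc x (Suc k) A" by (rule lcI) (use e(1) \<open>b \<in> A\<close> in auto)
  finally show ?thesis .
qed

lemma lc_Suc_E: "a \<in> lc x (Suc k) A \<Longrightarrow> (\<And>c b. c \<in> lc x k A \<Longrightarrow> b \<in> A \<Longrightarrow> a = c + x k * b \<Longrightarrow> P) \<Longrightarrow> P"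
proof -
  assume a: "a \<in> lc x (Suc k) A" and r: "\<And>c b. c \<in> lc x k A \<Longrightarrow> b \<in> A \<Longrightarrow> a = c + x k * b \<Longrightarrow> P"
  from a obtain e where e: "\<forall>i<Suc k. e i \<in> A" "a = (\<Sum>i<Suc k. x i * e i)" by (erule lcE)
  show P by (rule r[of "\<Sum>i<k. x i * e i" "e k"]) (use e in \<open>auto intro: lcI\<close>)
qed

lemma lc_mult_ipow:
  assumes I: "is_ideal I"
  shows "a \<in> lc x k (ideal_pow I p) \<Longrightarrow> b \<in> ideal_pow I q \<Longrightarrow> a * b \<in> lc x k (ideal_pow I (p + q))"
proof -
  assume a: "a \<in> lc x k (ideal_pow I p)" and b: "b \<in> ideal_pow I q"
  from a obtain e where e: "\<forall>i<k. e i \<in> ideal_pow I p" "a = (\<Sum>i<k. x i * e i)" by (erule lcE)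
  have "a * b = (\<Sum>i<k. x i * (e i * b))" by (simp add: e(2) sum_distrib_right mult.assoc)
  also have "\<dots> \<in> lc x k (ideal_pow I (p + q))" by (rule lcI) (use e(1) b ipow_mult[OF I] in auto)
  finally show ?thesis .
qed

lemma colon_ideal: "is_ideal A \<Longrightarrow> is_ideal (colon A b)"
  unfolding is_ideal_def colon_def by (auto simp: distrib_right mult.assoc)

lemma gi_empty: "gen_ideal {} = {0}"
proof -
  have "gen_ideal {} \<subseteq> {0}" by (rule gi_least) (auto simp: is_ideal_def)
  then show ?thesis using is_idealD(1)[OF gi_ideal[of "{}"]] by auto
qed


lemma gens_in_I:
  assumes I: "I = gen_ideal (insert y (x ` {..<s}))"
  shows "gens s x y i \<in> I"
  unfolding I gens_def by (rule gi_base) auto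

lemma I_ideal: "I = gen_ideal (insert y (x ` {..<s})) \<Longrightarrow> is_ideal I"
  using gi_ideal by simp

lemma meval_Vdeg_in:
  assumes I: "I = gen_ideal (insert y (x ` {..<s}))"
  shows "G \<in> Vdeg s n \<Longrightarrow> meval (gens s x y) G \<in> ideal_pow I n"
proof (induction n arbitrary: G)
  case 0 then show ?case by simp
next
  case (Suc n)
  obtain K where K: "\<forall>i\<le>s. K i \<in> Vdeg s n" "G = (\<Sum>i\<le>s. Var i * K i)"
    using Vd_decomp[OF Suc.prems] by blast
  have "meval (gens s x y) G = (\<Sum>i\<le>s. gens s x y i * meval (gens s x y) (K i))"
    unfolding K(2) by (simp add: meval_sum meval_mult)
  also have "\<dots> \<in> ideal_prod I (ideal_pow I n)"
    by (rule ideal_sum[OF ip_ideal], rule ip_mem) (use gens_in_I[OF I] Suc.IH K(1) in auto)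
  finally show ?case by simp
qed

definition Eset :: "nat \<Rightarrow> (nat \<Rightarrow> 'a::comm_ring_1) \<Rightarrow> 'a \<Rightarrow> nat \<Rightarrow> 'a set" where
  "Eset s x y n = {a. \<exists>G\<in>Vdeg s n. meval (gens s x y) G = a}"

lemma Eset_ideal: "is_ideal (Eset s x y n)"
  unfolding is_ideal_def Eset_def
proof (intro conjI ballI allI)
  show "0 \<in> {a. \<exists>G\<in>Vdeg s n. meval (gens s x y) G = a}"
    by (rule CollectI, rule bexI[of _ 0]) auto
next
  fix a b assume "a \<in> {a. \<exists>G\<in>Vdeg s n. meval (gens s x y) G = a}"
    "b \<in> {a. \<exists>G\<in>Vdeg s n. meval (gens s x y) G = a}"
  then obtain A B where "A \<in> Vdeg s n" "B \<in> Vdeg s n" "meval (gens s x y) A = a" "meval (gens s x y) B = b"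
    by blast
  then show "a + b \<in> {a. \<exists>G\<in>Vdeg s n. meval (gens s x y) G = a}"
    by (intro CollectI bexI[of _ "A + B"]) (auto simp: meval_add intro: Vd_add)
next
  fix r a assume "a \<in> {a. \<exists>G\<in>Vdeg s n. meval (gens s x y) G = a}"
  then obtain A where "A \<in> Vdeg s n" "meval (gens s x y) A = a" by blast
  then show "r * a \<in> {a. \<exists>G\<in>Vdeg s n. meval (gens s x y) G = a}"
    by (intro CollectI bexI[of _ "Const r * A"]) (auto simp: meval_mult intro: Vd_ConstMult)
qed

lemma ipow_repr:
  assumes I: "I = gen_ideal (insert y (x ` {..<s}))"
  shows "a \<in> ideal_pow I n \<Longrightarrow> \<exists>G\<in>Vdeg s n. meval (gens s x y) G = a"
proof (induction n arbitrary: a)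
  case 0
  show ?case by (rule bexI[of _ "Const a"]) auto
next
  case (Suc n)
  have I1: "I \<subseteq> Eset s x y 1"
    unfolding I
  proof (rule gi_least[OF _ Eset_ideal])
    show "insert y (x ` {..<s}) \<subseteq> Eset s x y 1"
    proof
      fix u assume "u \<in> insert y (x ` {..<s})"
      then have "\<exists>i\<le>s. u = gens s x y i"
      proof
        assume "u = y" then show ?thesis by (intro exI[of _ s]) (simp add: gens_def)
      next
        assume "u \<in> x ` {..<s}"
        then obtain j where "j < s" "u = x j" by auto
        then show ?thesis by (intro exI[of _ j]) (simp add: gens_def)
      qed
      then obtain i where i: "i \<le> s" "u = gens s x y i" by blast
      show "u \<in> Eset s x y 1" unfolding Eset_def
        by (rule CollectI, rule bexI[of _ "Var i"]) (use i Vd_Var[OF i(1)] in auto)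
    qed
  qed
  have "ideal_prod I (ideal_pow I n) \<subseteq> Eset s x y (Suc n)"
  proof (rule ip_least[OF _ Eset_ideal])
    fix u v assume u: "u \<in> I" and v: "v \<in> ideal_pow I n"
    obtain U where U: "U \<in> Vdeg s 1" "meval (gens s x y) U = u" using I1 u unfolding Eset_def by blast
    obtain V where V: "V \<in> Vdeg s n" "meval (gens s x y) V = v" using Suc.IH[OF v] by blast
    show "u * v \<in> Eset s x y (Suc n)" unfolding Eset_def
      by (rule CollectI, rule bexI[of _ "U * V"]) (use Vd_mult[OF U(1) V(1)] U(2) V(2) in \<open>auto simp: meval_mult\<close>)
  qed
  then show ?case using Suc.prems unfolding Eset_def by auto
qed

lemma rees_homog:
  assumes "F \<in> Vdeg s n"
  shows "rees_map s x y F = monom (meval (gens s x y) F) n"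
proof -
  have "rees_map s x y F = (\<Sum>mon\<in>Poly_Mapping.keys F.
      monom (Poly_Mapping.lookup F mon * (\<Prod>i\<in>Poly_Mapping.keys mon. gens s x y i ^ Poly_Mapping.lookup mon i)) n)"
    unfolding rees_map_def by (rule sum.cong) (use assms in \<open>auto simp: Vdeg_iff\<close>)
  also have "\<dots> = monom (meval (gens s x y) F) n"
    by (simp add: meval_def monom_sum)
  finally show ?thesis .
qed

lemma Qdeg_iff: "F \<in> Qdeg s x y n \<longleftrightarrow> F \<in> Vdeg s n \<and> meval (gens s x y) F = 0"
  by (auto simp: Qdeg_def Qeq_def rees_homog Vdeg_def)


definition Videal :: "nat \<Rightarrow> 'a::comm_ring_1 mpoly set \<Rightarrow> bool" where
  "Videal s T \<longleftrightarrow> 0 \<in> T \<and> (\<forall>a\<in>T. \<forall>b\<in>T. a + b \<in> T) \<and> (\<forall>c\<in>Vcarrier s. \<forall>a\<in>T. c * a \<in> T)"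

lemma VidealD:
  assumes "Videal s T"
  shows "0 \<in> T" "a \<in> T \<Longrightarrow> b \<in> T \<Longrightarrow> a + b \<in> T" "c \<in> Vcarrier s \<Longrightarrow> a \<in> T \<Longrightarrow> c * a \<in> T"
  using assms unfolding Videal_def by blast+

lemma Const_m1: "Const (-1) * b = - b"
  by (simp add: Const_def single_uminus)

lemma Videal_diff: "Videal s T \<Longrightarrow> a \<in> T \<Longrightarrow> b \<in> T \<Longrightarrow> a - b \<in> T"
  using VidealD(2)[of s T a "Const (-1) * b"] VidealD(3)[of s T "Const (-1)" b]
  by (simp add: Const_m1)

lemma Videal_sum: "Videal s T \<Longrightarrow> (\<And>i. i \<in> A \<Longrightarrow> f i \<in> T) \<Longrightarrow> sum f A \<in> T"
  by (induction A rule: infinite_finite_induct) (auto intro: VidealD)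

lemma VgenI: "(\<forall>i<k. g i \<in> S \<and> c i \<in> Vcarrier s) \<Longrightarrow> F = (\<Sum>i<(k::nat). c i * g i) \<Longrightarrow> F \<in> Vgen s S"
  unfolding Vgen_def by blast

lemma VgenE: "F \<in> Vgen s S \<Longrightarrow> (\<And>(k::nat) c g. \<forall>i<k. g i \<in> S \<and> c i \<in> Vcarrier s \<Longrightarrow> F = (\<Sum>i<k. c i * g i) \<Longrightarrow> P) \<Longrightarrow> P"
  unfolding Vgen_def by blast

lemma Vgen_Videal: "Videal s (Vgen s S)"
  unfolding Videal_def
proof (intro conjI ballI)
  show "0 \<in> Vgen s S" by (rule VgenI[of 0]) auto
next
  fix a b assume ha: "a \<in> Vgen s S" and hb: "b \<in> Vgen s S"
  obtain k :: nat and c g where a: "\<forall>i<k. g i \<in> S \<and> c i \<in> Vcarrier s" "a = (\<Sum>i<k. c i * g i)"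
    by (rule VgenE[OF ha])
  obtain k' :: nat and c' g' where b: "\<forall>i<k'. g' i \<in> S \<and> c' i \<in> Vcarrier s" "b = (\<Sum>i<k'. c' i * g' i)"
    by (rule VgenE[OF hb])
  define C where "C i = (if i < k then c i else c' (i - k))" for i
  define G where "G i = (if i < k then g i else g' (i - k))" for i
  have e: "a + b = (\<Sum>i<k+k'. C i * G i)"
    unfolding sum_concat by (simp add: a(2) b(2) C_def G_def)
  have "\<forall>i<k+k'. G i \<in> S \<and> C i \<in> Vcarrier s" using a(1) b(1) by (auto simp: G_def C_def)
  then show "a + b \<in> Vgen s S" using e by (rule VgenI)
next
  fix r a :: "'a::comm_ring_1 mpoly" assume r: "r \<in> Vcarrier s" and ha: "a \<in> Vgen s S"
  obtain k :: nat and c g where a: "\<forall>i<k. g i \<in> S \<and> c i \<in> Vcarrier s" "a = (\<Sum>i<k. c i * g i)"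
    by (rule VgenE[OF ha])
  have "r * a = (\<Sum>i<k. (r * c i) * g i)" by (simp add: a(2) sum_distrib_left mult.assoc)
  moreover have "\<forall>i<k. g i \<in> S \<and> r * c i \<in> Vcarrier s" using a(1) r by (auto intro: Vc_mult)
  ultimately show "r * a \<in> Vgen s S" by (intro VgenI[of k g S "\<lambda>i. r * c i"]) auto
qed

lemma Vgen_base: "u \<in> S \<Longrightarrow> u \<in> Vgen s S"
  by (rule VgenI[of 1 "\<lambda>_. u" S "\<lambda>_. 1"]) auto

lemma Vgen_least: "S \<subseteq> T \<Longrightarrow> Videal s T \<Longrightarrow> Vgen s S \<subseteq> T"
proof
  fix F assume ST: "S \<subseteq> T" and T: "Videal s T" and F: "F \<in> Vgen s S"
  obtain k :: nat and c g where a: "\<forall>i<k. g i \<in> S \<and> c i \<in> Vcarrier s" "F = (\<Sum>i<k. c i * g i)"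
    by (rule VgenE[OF F])
  show "F \<in> T" unfolding a(2)
    by (rule Videal_sum[OF T], rule VidealD(3)[OF T]) (use a(1) ST in auto)
qed

lemma Qle_mono: "m \<le> n \<Longrightarrow> Qle s x y m \<subseteq> Qle s x y n"
  unfolding Qle_def by (rule Vgen_least[OF _ Vgen_Videal], rule subsetI, rule Vgen_base) force

lemma Qdeg_in_Qle: "d \<le> n \<Longrightarrow> F \<in> Qdeg s x y d \<Longrightarrow> F \<in> Qle s x y n"
  unfolding Qle_def by (rule Vgen_base) auto

lemma Qle_Videal: "Videal s (Qle s x y n)"
  unfolding Qle_def by (rule Vgen_Videal)

lemma Qeq_Videal: "Videal s (Qeq s x y)"
  unfolding Videal_def Qeq_def by (auto intro: Vc_add Vc_mult simp: rees_add rees_mult)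

lemma Qle_sub_Qeq: "Qle s x y n \<subseteq> Qeq s x y"
  unfolding Qle_def by (rule Vgen_least[OF _ Qeq_Videal]) (auto simp: Qdeg_def)

definition hcomp :: "nat \<Rightarrow> 'a::comm_ring_1 mpoly \<Rightarrow> 'a mpoly" where
  "hcomp d F = (\<Sum>mon\<in>{m\<in>Poly_Mapping.keys F. mdeg m = d}. Poly_Mapping.single mon (Poly_Mapping.lookup F mon))"

lemma hcomp_Vdeg: "F \<in> Vcarrier s \<Longrightarrow> hcomp d F \<in> Vdeg s d"
  unfolding hcomp_def by (rule Vd_sum) (auto simp: Vdeg_iff Vc_iff)

lemma hcomp_sum: "F = (\<Sum>d\<in>mdeg ` Poly_Mapping.keys F. hcomp d F)"
proof -
  have "F = (\<Sum>m\<in>Poly_Mapping.keys F. Poly_Mapping.single m (Poly_Mapping.lookup F m))"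
    by (rule pm_expand)
  also have "\<dots> = (\<Sum>d\<in>mdeg ` Poly_Mapping.keys F. hcomp d F)"
    unfolding hcomp_def by (rule sum.group[symmetric]) auto
  finally show ?thesis .
qed

lemma rees_hcomp: "rees_map s x y (hcomp d F) = monom (coeff (rees_map s x y F) d) d"
proof -
  let ?S = "{m\<in>Poly_Mapping.keys F. mdeg m = d}"
  let ?t = "\<lambda>mon. Poly_Mapping.lookup F mon * mono (gens s x y) mon"
  have "rees_map s x y (hcomp d F) = (\<Sum>mon\<in>?S. monom (?t mon) d)"
    unfolding rees_Lh hcomp_def
    by (subst Lh_sum) (auto simp: add_monom Lh_single mult_monom intro!: sum.cong)
  also have "\<dots> = monom (\<Sum>mon\<in>?S. ?t mon) d" by (simp add: monom_sum)
  also have "(\<Sum>mon\<in>?S. ?t mon) = coeff (rees_map s x y F) d"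
  proof -
    have "coeff (rees_map s x y F) d = (\<Sum>mon\<in>Poly_Mapping.keys F. if mdeg mon = d then ?t mon else 0)"
      unfolding rees_map_def coeff_sum Submission.mono_def by (simp add: coeff_monom)
    also have "\<dots> = (\<Sum>mon\<in>?S. ?t mon)"
      by (simp add: sum.inter_filter)
    finally show ?thesis by simp
  qed
  finally show ?thesis .
qed

lemma Qeq_hcomp: "F \<in> Qeq s x y \<Longrightarrow> hcomp d F \<in> Qdeg s x y d"
  unfolding Qdeg_def Qeq_def
  using hcomp_Vdeg[of F s d] rees_hcomp[of s x y d F] by (auto simp: Vdeg_def)


lemma Gmult_Gstar: "Gmult (Gstar a) g n = (if n = 0 then 0 else a * g (n - 1))"
proof -
  have "Gmult (Gstar a) g n = (\<Sum>i\<le>n. if i = 1 then a * g (n - i) else 0)"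
    unfolding Gmult_def Gstar_def by (rule sum.cong) auto
  also have "\<dots> = (if n = 0 then 0 else a * g (n - 1))"
    by (simp add: sum.delta')
  finally show ?thesis .
qed

lemma Gelem_single:
  assumes I: "is_ideal I" and b: "b \<in> ideal_pow I j"
  shows "Gelem I (\<lambda>n. if n = j then b else 0)"
  unfolding Gelem_def
proof
  show "\<forall>n. (if n = j then b else 0) \<in> ideal_pow I n"
    using b is_idealD(1)[OF ipow_ideal] by auto
  show "finite {n. (if n = j then b else 0) \<noteq> 0}"
    by (rule finite_subset[of _ "{j}"]) auto
qed

lemma Valla:
  assumes I: "is_ideal I" and xI: "\<And>i. i < K \<Longrightarrow> x i \<in> I"
    and G: "\<forall>i<K. \<forall>g. Gelem I g \<longrightarrow> Gideal I x i (Gmult (Gstar (x i)) g) \<longrightarrow> Gideal I x i g"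
  shows "k \<le> K \<Longrightarrow> 1 \<le> m \<Longrightarrow> a \<in> lc x k UNIV \<Longrightarrow> a \<in> ideal_pow I m \<Longrightarrow> a \<in> lc x k (ideal_pow I (m - 1))"
proof (induction k arbitrary: m a)
  case 0
  then have "a = 0" by (auto simp: lc_def)
  then show ?case by (auto simp: lc_def)
next
  case (Suc k)
  note oIH = Suc.IH and oprems = Suc.prems
  have xk1: "x k \<in> ideal_pow I 1" using xI[of k] oprems(1) ipow_one[OF I] by auto
  have claim: "\<exists>c b. c \<in> lc x k UNIV \<and> b \<in> ideal_pow I j \<and> a = c + x k * b" if "j \<le> m - 1" for j
    using that
  proof (induction j)
    case 0
    show ?case by (rule lc_Suc_E[OF oprems(3)]) auto
  next
    case (Suc j)
    then obtain c b where cb: "c \<in> lc x k UNIV" "b \<in> ideal_pow I j" "a = c + x k * b" by auto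
    have jm: "Suc (Suc j) \<le> m" using Suc.prems by linarith
    have aI: "a \<in> ideal_pow I (Suc (Suc j))"
      using ipow_anti[OF I jm] \<open>a \<in> ideal_pow I m\<close> by blast
    have xb: "x k * b \<in> ideal_pow I (Suc j)" using ipow_mult[OF I xk1 cb(2)] by simp
    have cI: "c \<in> ideal_pow I (Suc j)"
    proof -
      have c: "c = a - x k * b" using cb(3) by simp
      have "a \<in> ideal_pow I (Suc j)" using aI ipow_Suc_sub[OF I] by blast
      then have "a - x k * b \<in> ideal_pow I (Suc j)" using xb by (rule ideal_diff[OF ipow_ideal])
      then show ?thesis unfolding c .
    qed
    have "c \<in> lc x k (ideal_pow I j)"
      using oIH[of "Suc j" c] oprems(1) cb(1) cI by simp
    then obtain e where e: "\<forall>i<k. e i \<in> ideal_pow I j" "c = (\<Sum>i<k. x i * e i)" by (rule lcE)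
    define gj where "gj = (\<lambda>n. if n = j then b else (0::'a))"
    have Ggj: "Gelem I gj" unfolding gj_def by (rule Gelem_single[OF I cb(2)])
    have kK: "k < K" using oprems(1) by simp
    have Pform: "Gmult (Gstar (x k)) gj = (\<lambda>n. if n = Suc j then x k * b else 0)"
      by (rule ext) (auto simp: Gmult_Gstar gj_def)
    have "Gideal I x k (Gmult (Gstar (x k)) gj)"
      unfolding Gideal_def
    proof (intro conjI exI[of _ "\<lambda>i n. if n = j then - e i else 0"])
      show "Gelem I (Gmult (Gstar (x k)) gj)"
        unfolding Pform by (rule Gelem_single[OF I xb])
      show "\<forall>i<k. Gelem I (\<lambda>n. if n = j then - e i else 0)"
        using e(1) by (auto intro!: Gelem_single[OF I] ideal_uminus[OF ipow_ideal])
      show "Geq I (Gmult (Gstar (x k)) gj)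
        (\<lambda>n. \<Sum>i<k. Gmult (Gstar (x i)) (\<lambda>n. if n = j then - e i else 0) n)"
        unfolding Geq_def
      proof
        fix n
        show "Gmult (Gstar (x k)) gj n - (\<Sum>i<k. Gmult (Gstar (x i)) (\<lambda>n. if n = j then - e i else 0) n)
           \<in> ideal_pow I (Suc n)"
        proof (cases "n = Suc j")
          case True
          have "Gmult (Gstar (x k)) gj n - (\<Sum>i<k. Gmult (Gstar (x i)) (\<lambda>n. if n = j then - e i else 0) n)
             = x k * b + c"
            using True by (simp add: Pform Gmult_Gstar e(2) sum_negf)
          also have "\<dots> = a" using cb(3) by (simp add: add.commute)
          finally show ?thesis using aI True by simp
        next
          case False
          have z: "\<And>i. Gmult (Gstar (x i)) (\<lambda>n. if n = j then - e i else 0) n = 0"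
            using False by (auto simp: Gmult_Gstar)
          have "Gmult (Gstar (x k)) gj n = 0" using False by (simp add: Pform)
          then show ?thesis using z is_idealD(1)[OF ip_ideal] by simp
        qed
      qed
    qed
    then have "Gideal I x k gj" using G kK Ggj by blast
    then obtain cc where cc: "\<forall>i<k. Gelem I (cc i)"
      "Geq I gj (\<lambda>n. \<Sum>i<k. Gmult (Gstar (x i)) (cc i) n)"
      unfolding Gideal_def by blast
    define d where "d i = (if j = 0 then 0 else cc i (j - 1))" for i
    have bd: "b - (\<Sum>i<k. x i * d i) \<in> ideal_pow I (Suc j)"
    proof -
      have "(\<Sum>i<k. Gmult (Gstar (x i)) (cc i) j) = (\<Sum>i<k. x i * d i)"
        by (rule sum.cong) (auto simp: Gmult_Gstar d_def)
      then show ?thesis using cc(2) unfolding Geq_def by (auto simp: gj_def elim!: allE[of _ j])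
    qed
    define c' where "c' = (\<Sum>i<k. x i * (x k * d i)) + c"
    define b' where "b' = b - (\<Sum>i<k. x i * d i)"
    have "c' \<in> lc x k UNIV" unfolding c'_def
      by (rule is_idealD(2)[OF lc_ideal[OF is_ideal_UNIV] _ cb(1)], rule lcI) auto
    moreover have "a = c' + x k * b'"
      unfolding c'_def b'_def cb(3) by (simp add: algebra_simps sum_distrib_left)
    ultimately show ?case using bd b'_def by blast
  qed
  obtain c b where cb: "c \<in> lc x k UNIV" "b \<in> ideal_pow I (m - 1)" "a = c + x k * b"
    using claim[of "m - 1"] by auto
  have xb: "x k * b \<in> ideal_pow I m" using ipow_mult[OF I xk1 cb(2)] Suc.prems(2) by simp
  have "c \<in> ideal_pow I m"
    using cb(3) xb Suc.prems(4) ideal_diff[OF ipow_ideal, of a I m "x k * b"] by simp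
  then have "c \<in> lc x k (ideal_pow I (m - 1))"
    using Suc.IH[of m c] Suc.prems cb(1) by simp
  then show ?case using cb lc_Suc_I by metis
qed


lemma meval_lin_x: "k \<le> s \<Longrightarrow> meval (gens s x y) (\<Sum>i<k. Var i * K i) = (\<Sum>i<k. x i * meval (gens s x y) (K i))"
  by (auto simp: meval_sum meval_mult gens_def intro!: sum.cong)

lemma gens_s [simp]: "gens s x y s = y" by (simp add: gens_def)

lemma meval_Ys [simp]: "meval (gens s x y) (Var s ^ n) = y ^ n"
  by (simp add: meval_pow gens_def)

lemma clause1:
  assumes I: "I = gen_ideal (insert y (x ` {..<s}))"
    and F: "F \<in> Qdeg s x y (Suc m)"
  shows "meval (ev1 s) F * y ^ Suc m \<in> lc x s (ideal_pow I m)"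
proof -
  have FV: "F \<in> Vdeg s (Suc m)" and F0: "meval (gens s x y) F = 0" using F by (auto simp: Qdeg_iff)
  obtain K where K: "\<forall>i<s. K i \<in> Vdeg s m"
    "F = Const (meval (ev1 s) F) * Var s ^ Suc m + (\<Sum>i<s. Var i * K i)"
    using Vd_decomp2[OF FV] by blast
  define c where "c = meval (ev1 s) F"
  have "0 = meval (gens s x y) (Const c * Var s ^ Suc m + (\<Sum>i<s. Var i * K i))"
    using F0 K(2) unfolding c_def by simp
  also have "\<dots> = c * y ^ Suc m + (\<Sum>i<s. x i * meval (gens s x y) (K i))"
    by (simp add: meval_add meval_mult meval_lin_x)
  finally have "c * y ^ Suc m = (\<Sum>i<s. x i * (- meval (gens s x y) (K i)))"
    by (simp add: sum_negf eq_neg_iff_add_eq_0)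
  also have "\<dots> \<in> lc x s (ideal_pow I m)"
    by (rule lcI) (use K(1) meval_Vdeg_in[OF I] in \<open>auto intro: ideal_uminus[OF ipow_ideal]\<close>)
  finally show ?thesis unfolding c_def .
qed

lemma clause4_fwd:
  assumes I: "I = gen_ideal (insert y (x ` {..<s}))"
    and n: "n \<ge> 2" and F: "F \<in> Qle s x y (n - 1)"
  shows "meval (ev1 s) F \<in> colon (lc x s (ideal_pow I (n - 2))) (y ^ (n - 1))"
proof -
  have Iid: "is_ideal I" using I gi_ideal by simp
  have yI: "y \<in> I" unfolding I by (rule gi_base) simp
  let ?C = "colon (lc x s (ideal_pow I (n - 2))) (y ^ (n - 1))"
  have Cid: "is_ideal ?C" by (intro colon_ideal lc_ideal ipow_ideal)
  have Cid': "is_ideal (colon (lc x s (ideal_pow I (n - 2))) (y ^ (n - Suc 0)))" using Cid by simp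
  let ?T = "{F. meval (ev1 s) F \<in> ?C}"
  have "Qle s x y (n - 1) \<subseteq> ?T"
    unfolding Qle_def
  proof (rule Vgen_least)
    show "Videal s ?T" unfolding Videal_def
      by (auto simp: meval_add meval_mult intro: is_idealD[OF Cid'])
    show "(\<Union>d\<in>{..n - 1}. Qdeg s x y d) \<subseteq> ?T"
    proof
      fix G assume "G \<in> (\<Union>d\<in>{..n - 1}. Qdeg s x y d)"
      then obtain d where d: "d \<le> n - 1" "G \<in> Qdeg s x y d" by auto
      show "G \<in> ?T"
      proof (cases d)
        case 0
        then have "G \<in> Vdeg s 0" "meval (gens s x y) G = 0" using d(2) by (auto simp: Qdeg_iff)
        then have "G = 0" using Vd0[of G s "gens s x y"] by (simp add: Const_def)
        then show ?thesis using is_idealD(1)[OF Cid] by simp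
      next
        case (Suc e)
        have c1: "meval (ev1 s) G * y ^ Suc e \<in> lc x s (ideal_pow I e)"
          using clause1[OF I] d(2) Suc by simp
        have "meval (ev1 s) G * y ^ Suc e * y ^ (n - 1 - Suc e) \<in> lc x s (ideal_pow I (e + (n - 1 - Suc e)))"
          by (rule lc_mult_ipow[OF Iid c1 ipow_elem[OF Iid yI]])
        moreover have "e + (n - 1 - Suc e) = n - 2" using d(1) Suc n by simp
        moreover have "meval (ev1 s) G * y ^ Suc e * y ^ (n - 1 - Suc e) = meval (ev1 s) G * y ^ (n - 1)"
        proof -
          have "Suc e + (n - 1 - Suc e) = n - 1" using d(1) Suc by simp
          then have "y ^ Suc e * y ^ (n - 1 - Suc e) = y ^ (n - 1)" by (metis power_add)
          then show ?thesis by (simp only: mult.assoc)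
        qed
        ultimately show ?thesis by (simp add: colon_def)
      qed
    qed
  qed
  then show ?thesis using F by blast
qed

lemma key_lemma:
  assumes I: "I = gen_ideal (insert y (x ` {..<s}))"
    and Rseq: "reg_seq x s"
    and Gseq: "G_reg_seq I x (s - 1)"
    and n: "n \<ge> 2"
  shows "k \<le> s \<Longrightarrow> (\<forall>i<k. K i \<in> Vdeg s (n - 1)) \<Longrightarrow> meval (gens s x y) (\<Sum>i<k. Var i * K i) = 0
     \<Longrightarrow> (\<Sum>i<k. Var i * K i) \<in> Qle s x y (n - 1)"
proof (induction k arbitrary: K)
  case 0 then show ?case using VidealD(1)[OF Qle_Videal] by simp
next
  case (Suc k)
  have Iid: "is_ideal I" using I gi_ideal by simp
  have xI: "x i \<in> I" if "i < s" for i unfolding I using that by (intro gi_base) auto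
  let ?g = "gens s x y"
  define a where "a i = meval ?g (K i)" for i
  have ks: "k < s" using Suc.prems(1) by simp
  have "0 = meval ?g (\<Sum>i<Suc k. Var i * K i)" using Suc.prems(3) by simp
  also have "\<dots> = (\<Sum>i<k. x i * a i) + x k * a k"
    using meval_lin_x[OF Suc.prems(1), where K=K and x=x and y=y] by (simp add: a_def)
  finally have eq: "x k * a k = - (\<Sum>i<k. x i * a i)" by (simp add: eq_neg_iff_add_eq_0 add.commute)
  have "x k * a k \<in> lc x k UNIV"
    unfolding eq by (rule ideal_uminus[OF lc_ideal[OF is_ideal_UNIV]], rule lcI) auto
  then have "a k * x k \<in> gen_ideal (x ` {..<k})" by (simp add: gi_lc mult.commute)
  then have akJ: "a k \<in> lc x k UNIV" using Rseq ks unfolding reg_seq_def gi_lc by blast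
  have akI: "a k \<in> ideal_pow I (n - 1)" unfolding a_def
    by (rule meval_Vdeg_in[OF I]) (use Suc.prems(2) in simp)
  have ak2: "a k \<in> lc x k (ideal_pow I (n - 1 - 1))"
  proof (rule Valla[OF Iid, of "s - 1"])
    show "x i \<in> I" if "i < s - 1" for i using xI that by simp
    show "\<forall>i<s - 1. \<forall>g. Gelem I g \<longrightarrow> Gideal I x i (Gmult (Gstar (x i)) g) \<longrightarrow> Gideal I x i g"
      using Gseq unfolding G_reg_seq_def by blast
    show "k \<le> s - 1" using ks by simp
    show "1 \<le> n - 1" using n by simp
  qed (use akJ akI in auto)
  have n11: "n - 1 - 1 = n - 2" by simp
  obtain e where e: "\<forall>j<k. e j \<in> ideal_pow I (n - 2)" "a k = (\<Sum>j<k. x j * e j)"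
    using ak2 unfolding n11 by (rule lcE)
  have "\<forall>j\<in>{..<k}. \<exists>B. B \<in> Vdeg s (n - 2) \<and> meval ?g B = e j"
  proof
    fix j assume "j \<in> {..<k}"
    then have "e j \<in> ideal_pow I (n - 2)" using e(1) by simp
    then obtain G where "G \<in> Vdeg s (n - 2)" "meval ?g G = e j" using ipow_repr[OF I] by blast
    then show "\<exists>B. B \<in> Vdeg s (n - 2) \<and> meval ?g B = e j" by blast
  qed
  from bchoice[OF this] obtain B where B: "\<forall>j\<in>{..<k}. B j \<in> Vdeg s (n - 2) \<and> meval ?g (B j) = e j"
    by blast
  have n21: "Suc (n - 2) = n - 1" using n by simp
  define K' where "K' = K k - (\<Sum>j<k. Var j * B j)"
  have K'V: "K' \<in> Vdeg s (n - 1)"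
    unfolding K'_def
  proof (rule Vd_diff)
    show "K k \<in> Vdeg s (n - 1)" using Suc.prems(2) by simp
    show "(\<Sum>j<k. Var j * B j) \<in> Vdeg s (n - 1)"
      by (rule Vd_sum) (use B ks n21 Vd_VarMult[of _ s "B _" "n - 2"] in auto)
  qed
  have K'0: "meval ?g K' = 0"
    unfolding K'_def using meval_lin_x[of k s x y B] ks B e(2)
    by (simp add: meval_minus a_def)
  have K'Q: "K' \<in> Qdeg s x y (n - 1)" unfolding Qdeg_iff using K'V K'0 by blast
  have VK': "Var k * K' \<in> Qle s x y (n - 1)"
    by (rule VidealD(3)[OF Qle_Videal Vc_Var Qdeg_in_Qle[OF order.refl K'Q]]) (use ks in simp)
  define K'' where "K'' j = K j + Var k * B j" for j
  have ident: "(\<Sum>i<Suc k. Var i * K i) = (\<Sum>i<k. Var i * K'' i) + Var k * K'"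
    by (simp add: K''_def K'_def algebra_simps sum.distrib sum_distrib_left)
  have "meval ?g (\<Sum>i<k. Var i * K'' i) = 0"
    using arg_cong[OF ident, of "meval ?g"] Suc.prems(3) K'0 by (simp add: meval_add meval_mult)
  moreover have "\<forall>i<k. K'' i \<in> Vdeg s (n - 1)"
  proof (intro allI impI)
    fix i assume i: "i < k"
    have "Var k * B i \<in> Vdeg s (Suc (n - 2))" using B i ks by (intro Vd_VarMult) auto
    then have "Var k * B i \<in> Vdeg s (n - 1)" unfolding n21 .
    moreover have "K i \<in> Vdeg s (n - 1)" using Suc.prems(2) i by simp
    ultimately show "K'' i \<in> Vdeg s (n - 1)" unfolding K''_def by (rule Vd_add[rotated])
  qed
  ultimately have "(\<Sum>i<k. Var i * K'' i) \<in> Qle s x y (n - 1)"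
    using Suc.IH[of K''] ks by simp
  then show ?case unfolding ident using VK' by (rule VidealD(2)[OF Qle_Videal])
qed


lemma lc_repr:
  assumes I: "I = gen_ideal (insert y (x ` {..<s}))"
    and a: "a \<in> lc x s (ideal_pow I m)"
  shows "\<exists>H. (\<forall>i<s. H i \<in> Vdeg s m) \<and> a = meval (gens s x y) (\<Sum>i<s. Var i * H i)"
proof -
  obtain h where h: "\<forall>i<s. h i \<in> ideal_pow I m" "a = (\<Sum>i<s. x i * h i)"
    using a by (rule lcE)
  have "\<forall>j\<in>{..<s}. \<exists>B. B \<in> Vdeg s m \<and> meval (gens s x y) B = h j"
  proof
    fix j assume "j \<in> {..<s}"
    then have "h j \<in> ideal_pow I m" using h(1) by simp
    then obtain G where "G \<in> Vdeg s m" "meval (gens s x y) G = h j" using ipow_repr[OF I] by blast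
    then show "\<exists>B. B \<in> Vdeg s m \<and> meval (gens s x y) B = h j" by blast
  qed
  from bchoice[OF this] obtain H where H: "\<forall>j\<in>{..<s}. H j \<in> Vdeg s m \<and> meval (gens s x y) (H j) = h j"
    by blast
  have "a = meval (gens s x y) (\<Sum>i<s. Var i * H i)"
    unfolding h(2) meval_lin_x[OF order.refl] using H by simp
  then show ?thesis using H by auto
qed

lemma clause4_bwd:
  assumes I: "I = gen_ideal (insert y (x ` {..<s}))"
    and Rseq: "reg_seq x s"
    and Gseq: "G_reg_seq I x (s - 1)"
    and n: "n \<ge> 2"
    and F: "F \<in> Qdeg s x y n"
    and a: "meval (ev1 s) F \<in> colon (lc x s (ideal_pow I (n - 2))) (y ^ (n - 1))"
  shows "F \<in> Qle s x y (n - 1)"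
proof -
  let ?g = "gens s x y"
  define c where "c = meval (ev1 s) F"
  have "c * y ^ (n - 1) \<in> lc x s (ideal_pow I (n - 2))" using a by (simp add: colon_def c_def)
  then obtain H where H: "\<forall>i<s. H i \<in> Vdeg s (n - 2)" "c * y ^ (n - 1) = meval ?g (\<Sum>i<s. Var i * H i)"
    using lc_repr[OF I] by blast
  have n21: "Suc (n - 2) = n - 1" using n by simp
  have n1: "Suc (n - 1) = n" using n by simp
  define G where "G = Const c * Var s ^ (n - 1) - (\<Sum>i<s. Var i * H i)"
  have GV: "G \<in> Vdeg s (n - 1)" unfolding G_def
  proof (rule Vd_diff)
    show "Const c * Var s ^ (n - 1) \<in> Vdeg s (n - 1)" by (intro Vd_ConstMult Vd_pow Vd_Var) simp
    have "(\<Sum>i<s. Var i * H i) \<in> Vdeg s (Suc (n - 2))"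
      by (rule Vd_sum) (use H(1) in \<open>auto intro: Vd_VarMult\<close>)
    then show "(\<Sum>i<s. Var i * H i) \<in> Vdeg s (n - 1)" unfolding n21 .
  qed
  have G0: "meval ?g G = 0" unfolding G_def using H(2) by (simp add: meval_minus meval_mult)
  have GQ: "G \<in> Qdeg s x y (n - 1)" unfolding Qdeg_iff using GV G0 by blast
  have YG: "Var s * G \<in> Qle s x y (n - 1)"
    by (rule VidealD(3)[OF Qle_Videal Vc_Var Qdeg_in_Qle[OF order.refl GQ]]) simp
  have FV: "F \<in> Vdeg s (Suc (n - 1))" and F0: "meval ?g F = 0"
    using F n1 by (auto simp: Qdeg_iff)
  obtain K where K: "\<forall>i<s. K i \<in> Vdeg s (n - 1)"
    "F = Const c * Var s ^ Suc (n - 1) + (\<Sum>i<s. Var i * K i)"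
    using Vd_decomp2[OF FV] unfolding c_def by blast
  define K' where "K' i = K i + Var s * H i" for i
  have ident: "F - Var s * G = (\<Sum>i<s. Var i * K' i)"
    unfolding K(2) G_def K'_def
    by (simp add: algebra_simps sum.distrib sum_distrib_left)
  have K'V: "\<forall>i<s. K' i \<in> Vdeg s (n - 1)"
  proof (intro allI impI)
    fix i assume i: "i < s"
    have "Var s * H i \<in> Vdeg s (Suc (n - 2))" using H(1) i by (intro Vd_VarMult) auto
    then have "Var s * H i \<in> Vdeg s (n - 1)" unfolding n21 .
    moreover have "K i \<in> Vdeg s (n - 1)" using K(1) i by simp
    ultimately show "K' i \<in> Vdeg s (n - 1)" unfolding K'_def by (rule Vd_add[rotated])
  qed
  have "meval ?g (\<Sum>i<s. Var i * K' i) = 0"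
    unfolding ident[symmetric] by (simp add: meval_minus meval_mult F0 G0)
  then have "(\<Sum>i<s. Var i * K' i) \<in> Qle s x y (n - 1)"
    using key_lemma[OF I Rseq Gseq n order.refl K'V] by simp
  then have "(F - Var s * G) + Var s * G \<in> Qle s x y (n - 1)"
    unfolding ident using YG by (rule VidealD(2)[OF Qle_Videal])
  then show ?thesis by simp
qed

lemma clause5:
  assumes I: "I = gen_ideal (insert y (x ` {..<s}))"
    and n: "n \<ge> 1"
    and a: "a \<in> colon (lc x s (ideal_pow I (n - 1))) (y ^ n)"
  shows "\<exists>F\<in>Qdeg s x y n. meval (ev1 s) F = a"
proof -
  let ?g = "gens s x y"
  have "a * y ^ n \<in> lc x s (ideal_pow I (n - 1))" using a by (simp add: colon_def)
  then obtain H where H: "\<forall>i<s. H i \<in> Vdeg s (n - 1)" "a * y ^ n = meval ?g (\<Sum>i<s. Var i * H i)"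
    using lc_repr[OF I] by blast
  have n1: "Suc (n - 1) = n" using n by simp
  define F where "F = Const a * Var s ^ n - (\<Sum>i<s. Var i * H i)"
  have FV: "F \<in> Vdeg s n" unfolding F_def
  proof (rule Vd_diff)
    show "Const a * Var s ^ n \<in> Vdeg s n" by (intro Vd_ConstMult Vd_pow Vd_Var) simp
    have "(\<Sum>i<s. Var i * H i) \<in> Vdeg s (Suc (n - 1))"
      by (rule Vd_sum) (use H(1) in \<open>auto intro: Vd_VarMult\<close>)
    then show "(\<Sum>i<s. Var i * H i) \<in> Vdeg s n" unfolding n1 .
  qed
  have F0: "meval ?g F = 0" unfolding F_def using H(2) by (simp add: meval_minus meval_mult)
  have "meval (ev1 s) F = a" unfolding F_def by (simp add: meval_minus meval_mult meval_pow ev1_lin)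
  moreover have "F \<in> Qdeg s x y n" unfolding Qdeg_iff using FV F0 by blast
  ultimately show ?thesis by blast
qed


lemma lc_sub_ipow:
  assumes I: "I = gen_ideal (insert y (x ` {..<s}))"
  shows "lc x s (ideal_pow I m) \<subseteq> ideal_pow I (Suc m)"
proof
  fix a assume "a \<in> lc x s (ideal_pow I m)"
  then obtain e where e: "\<forall>i<s. e i \<in> ideal_pow I m" "a = (\<Sum>i<s. x i * e i)" by (rule lcE)
  have xI: "x i \<in> I" if "i < s" for i unfolding I using that by (intro gi_base) auto
  show "a \<in> ideal_pow I (Suc m)" unfolding e(2) ideal_pow.simps
    by (rule ideal_sum[OF ip_ideal], rule ip_mem) (use e(1) xI in auto)
qed

lemma ipow_sub_lc:
  assumes I: "I = gen_ideal (insert y (x ` {..<s}))"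
    and y: "y ^ Suc m \<in> lc x s (ideal_pow I m)"
  shows "ideal_pow I (Suc m) \<subseteq> lc x s (ideal_pow I m)"
proof
  fix a assume "a \<in> ideal_pow I (Suc m)"
  then obtain G where G: "G \<in> Vdeg s (Suc m)" "meval (gens s x y) G = a" using ipow_repr[OF I] by blast
  obtain K where K: "\<forall>i<s. K i \<in> Vdeg s m"
    "G = Const (meval (ev1 s) G) * Var s ^ Suc m + (\<Sum>i<s. Var i * K i)"
    using Vd_decomp2[OF G(1)] by blast
  define c where "c = meval (ev1 s) G"
  have "a = c * y ^ Suc m + (\<Sum>i<s. x i * meval (gens s x y) (K i))"
    using arg_cong[OF K(2), of "meval (gens s x y)"] G(2) unfolding c_def[symmetric]
    by (simp add: meval_add meval_mult meval_lin_x)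
  also have "\<dots> \<in> lc x s (ideal_pow I m)"
  proof (rule is_idealD(2)[OF lc_ideal[OF ipow_ideal]])
    show "c * y ^ Suc m \<in> lc x s (ideal_pow I m)" by (rule is_idealD(3)[OF lc_ideal[OF ipow_ideal] y])
    show "(\<Sum>i<s. x i * meval (gens s x y) (K i)) \<in> lc x s (ideal_pow I m)"
      by (rule lcI) (use K(1) meval_Vdeg_in[OF I] in auto)
  qed
  finally show "a \<in> lc x s (ideal_pow I m)" .
qed

lemma reduction_part:
  fixes I :: "'a::comm_ring_1 set"
  assumes I: "I = gen_ideal (insert y (x ` {..<s}))"
    and mg: "\<forall>S. finite S \<and> gen_ideal S = I \<longrightarrow> Suc s \<le> card S"
    and Rseq: "reg_seq x s"
    and Gseq: "G_reg_seq I x (s - 1)"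
    and red: "is_reduction (gen_ideal (x ` {..<s})) I"
  defines "r \<equiv> reduction_number (gen_ideal (x ` {..<s})) I"
  shows "relation_type s x y = r + 1
          \<and> (\<exists>Fs. (\<forall>i<s. Fs i \<in> Vdeg s r)
               \<and> Var s ^ (r + 1) - (\<Sum>i<s. Var i * Fs i) \<in> Qdeg s x y (r + 1)
               \<and> Qeq s x y = Vgen s (insert (Var s ^ (r + 1) - (\<Sum>i<s. Var i * Fs i)) (Qle s x y r)))"
proof -
  let ?J = "gen_ideal (x ` {..<s})"
  let ?g = "gens s x y"
  have Iid: "is_ideal I" using I gi_ideal by simp
  have yI: "y \<in> I" unfolding I by (rule gi_base) simp
  have JP: "ideal_prod ?J (ideal_pow I m) = lc x s (ideal_pow I m)" for m
    by (rule ip_lc[OF ipow_ideal])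
  have ex: "\<exists>m. ideal_pow I (Suc m) = ideal_prod ?J (ideal_pow I m)"
    using red unfolding is_reduction_def by blast
  have rr: "ideal_pow I (Suc r) = lc x s (ideal_pow I r)"
    using LeastI_ex[OF ex] unfolding r_def reduction_number_def JP .
  have rmin: "ideal_pow I (Suc m) \<noteq> lc x s (ideal_pow I m)" if "m < r" for m
    using not_less_Least[OF that[unfolded r_def reduction_number_def]] unfolding JP r_def reduction_number_def .
  have r1: "r \<ge> 1"
  proof (rule ccontr)
    assume "\<not> r \<ge> 1"
    then have "r = 0" by simp
    then have "I = lc x s UNIV" using rr ipow_one[OF Iid] by simp
    then have "gen_ideal (x ` {..<s}) = I" by (simp add: gi_lc)
    then have "Suc s \<le> card (x ` {..<s})" using mg by blast
    moreover have "card (x ` {..<s}) \<le> s" using card_image_le[of "{..<s}" x] by simp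
    ultimately show False by simp
  qed
  have yr: "y ^ r \<notin> lc x s (ideal_pow I (r - 1))"
  proof
    assume y: "y ^ r \<in> lc x s (ideal_pow I (r - 1))"
    have rs: "Suc (r - 1) = r" using r1 by simp
    have "ideal_pow I (Suc (r - 1)) = lc x s (ideal_pow I (r - 1))"
      using ipow_sub_lc[OF I, of "r - 1"] lc_sub_ipow[OF I, of "r - 1"] y rs by auto
    moreover have "r - 1 < r" using r1 by simp
    ultimately show False using rmin by blast
  qed
  have yn: "y ^ n \<in> lc x s (ideal_pow I (n - 1))" if "n \<ge> r + 1" for n
    using that
  proof (induction n)
    case 0 then show ?case by simp
  next
    case (Suc n)
    show ?case
    proof (cases "Suc n = r + 1")
      case True
      have "y ^ Suc r \<in> ideal_pow I (Suc r)" by (rule ipow_elem[OF Iid yI])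
      then show ?thesis using True rr by simp
    next
      case False
      then have "n \<ge> r + 1" using Suc.prems by simp
      then have "y ^ n * y \<in> lc x s (ideal_pow I (n - 1 + 1))"
        using lc_mult_ipow[OF Iid Suc.IH, of y 1] yI ipow_one[OF Iid] by auto
      moreover have "n - 1 + 1 = Suc n - 1" using \<open>n \<ge> r + 1\<close> by simp
      ultimately show ?thesis by (simp add: mult.commute)
    qed
  qed
  obtain Fs where Fs: "\<forall>i<s. Fs i \<in> Vdeg s r" "y ^ Suc r = meval ?g (\<Sum>i<s. Var i * Fs i)"
    using lc_repr[OF I, of "y ^ Suc r" r] ipow_elem[OF Iid yI, of "Suc r"] rr by auto
  define P where "P = Var s ^ (r + 1) - (\<Sum>i<s. Var i * Fs i)"
  have PV: "P \<in> Vdeg s (r + 1)" unfolding P_def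
  proof (rule Vd_diff)
    show "Var s ^ (r + 1) \<in> Vdeg s (r + 1)" by (intro Vd_pow Vd_Var) simp
    show "(\<Sum>i<s. Var i * Fs i) \<in> Vdeg s (r + 1)"
      by (rule Vd_sum) (use Fs(1) in \<open>auto intro: Vd_VarMult\<close>)
  qed
  have P0: "meval ?g P = 0" unfolding P_def using Fs(2) by (simp add: meval_minus meval_mult)
  have PQ: "P \<in> Qdeg s x y (r + 1)" unfolding Qdeg_iff using PV P0 by blast
  have Pe: "meval (ev1 s) P = 1" unfolding P_def by (simp add: meval_minus meval_pow meval_mult ev1_lin)
  have PnQ: "P \<notin> Qle s x y r"
  proof
    assume "P \<in> Qle s x y r"
    then have "meval (ev1 s) P \<in> colon (lc x s (ideal_pow I (r + 1 - 2))) (y ^ (r + 1 - 1))"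
      using clause4_fwd[OF I, of "r + 1" P] r1 by simp
    then have "y ^ r \<in> lc x s (ideal_pow I (r - 1))" using Pe by (simp add: colon_def)
    then show False using yr by blast
  qed
  have step: "Qle s x y (Suc n) \<subseteq> Qle s x y n" if "n \<ge> r + 1" for n
    unfolding Qle_def[of s x y "Suc n"]
  proof (rule Vgen_least[OF _ Qle_Videal])
    show "(\<Union>d\<in>{..Suc n}. Qdeg s x y d) \<subseteq> Qle s x y n"
    proof
      fix F assume "F \<in> (\<Union>d\<in>{..Suc n}. Qdeg s x y d)"
      then obtain d where d: "d \<le> Suc n" "F \<in> Qdeg s x y d" by auto
      show "F \<in> Qle s x y n"
      proof (cases "d = Suc n")
        case False
        then show ?thesis using d Qdeg_in_Qle[of d n F] by simp
      next
        case True
        have "meval (ev1 s) F \<in> colon (lc x s (ideal_pow I (Suc n - 2))) (y ^ (Suc n - 1))"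
        proof -
          have "y ^ n \<in> lc x s (ideal_pow I (n - 1))" using yn that by blast
          then have "meval (ev1 s) F * y ^ n \<in> lc x s (ideal_pow I (n - 1))"
            by (rule is_idealD(3)[OF lc_ideal[OF ipow_ideal]])
          moreover have "Suc n - 2 = n - 1" by simp
          ultimately show ?thesis by (simp add: colon_def)
        qed
        then have "F \<in> Qle s x y (Suc n - 1)"
          using clause4_bwd[OF I Rseq Gseq, of "Suc n" F] d True that r1 by simp
        then show ?thesis by simp
      qed
    qed
  qed
  have down: "Qle s x y n \<subseteq> Qle s x y (r + 1)" for n
  proof (cases "n \<ge> r + 1")
    case True
    show ?thesis using True
    proof (induction n)
      case 0 then show ?case by simp
    next
      case (Suc n)
      show ?case
      proof (cases "Suc n = r + 1")
        case True then show ?thesis by simp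
      next
        case False
        then have "n \<ge> r + 1" using Suc.prems by simp
        then show ?thesis using Suc.IH step by blast
      qed
    qed
  next
    case False then show ?thesis by (intro Qle_mono) simp
  qed
  have QQ: "Qeq s x y = Qle s x y (r + 1)"
  proof
    show "Qle s x y (r + 1) \<subseteq> Qeq s x y" by (rule Qle_sub_Qeq)
    show "Qeq s x y \<subseteq> Qle s x y (r + 1)"
    proof
      fix F assume F: "F \<in> Qeq s x y"
      have "(\<Sum>d\<in>mdeg ` Poly_Mapping.keys F. hcomp d F) \<in> Qle s x y (r + 1)"
      proof (rule Videal_sum[OF Qle_Videal])
        fix d
        have "hcomp d F \<in> Qle s x y d" by (rule Qdeg_in_Qle[OF order.refl Qeq_hcomp[OF F]])
        then show "hcomp d F \<in> Qle s x y (r + 1)" using down by blast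
      qed
      then show "F \<in> Qle s x y (r + 1)" using hcomp_sum[of F] by simp
    qed
  qed
  have rt: "relation_type s x y = r + 1"
    unfolding relation_type_def
  proof (rule Least_equality)
    show "1 \<le> r + 1 \<and> Qeq s x y = Qle s x y (r + 1)" using QQ by simp
    fix N assume N: "1 \<le> N \<and> Qeq s x y = Qle s x y N"
    show "r + 1 \<le> N"
    proof (rule ccontr)
      assume "\<not> r + 1 \<le> N"
      then have "Qle s x y N \<subseteq> Qle s x y r" by (intro Qle_mono) simp
      moreover have "P \<in> Qeq s x y" using PQ by (auto simp: Qdeg_def)
      ultimately show False using N PnQ by blast
    qed
  qed
  have W: "Qeq s x y = Vgen s (insert P (Qle s x y r))"
  proof
    show "Vgen s (insert P (Qle s x y r)) \<subseteq> Qeq s x y"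
    proof (rule Vgen_least[OF _ Qeq_Videal])
      have "P \<in> Qeq s x y" using PQ by (simp add: Qdeg_def)
      then show "insert P (Qle s x y r) \<subseteq> Qeq s x y" using Qle_sub_Qeq[of s x y r] by blast
    qed
    show "Qeq s x y \<subseteq> Vgen s (insert P (Qle s x y r))"
      unfolding QQ Qle_def[of s x y "r + 1"]
    proof (rule Vgen_least[OF _ Vgen_Videal])
      show "(\<Union>d\<in>{..r + 1}. Qdeg s x y d) \<subseteq> Vgen s (insert P (Qle s x y r))"
      proof
        fix F assume "F \<in> (\<Union>d\<in>{..r + 1}. Qdeg s x y d)"
        then obtain d where d: "d \<le> r + 1" "F \<in> Qdeg s x y d" by auto
        show "F \<in> Vgen s (insert P (Qle s x y r))"
        proof (cases "d = r + 1")
          case False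
          then have "F \<in> Qle s x y r" using d Qdeg_in_Qle[of d r F] by simp
          then show ?thesis by (intro Vgen_base) simp
        next
          case True
          define a where "a = meval (ev1 s) F"
          define F' where "F' = F - Const a * P"
          have FV: "F \<in> Vdeg s (r + 1)" "meval ?g F = 0" using d True by (auto simp: Qdeg_iff)
          have F'Q: "F' \<in> Qdeg s x y (r + 1)" unfolding Qdeg_iff F'_def
            using FV PV P0 by (auto intro: Vd_diff Vd_ConstMult simp: meval_minus meval_mult)
          have "meval (ev1 s) F' = 0" unfolding F'_def a_def using Pe by (simp add: meval_minus meval_mult)
          then have "F' \<in> Qle s x y (r + 1 - 1)"
            using clause4_bwd[OF I Rseq Gseq, of "r + 1" F'] F'Q r1
            by (simp add: is_idealD(1)[OF colon_ideal[OF lc_ideal[OF ipow_ideal]]])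
          then have "F' \<in> Vgen s (insert P (Qle s x y r))" by (intro Vgen_base) simp
          moreover have "Const a * P \<in> Vgen s (insert P (Qle s x y r))"
            by (rule VidealD(3)[OF Vgen_Videal Vc_Const], rule Vgen_base) simp
          ultimately have "F' + Const a * P \<in> Vgen s (insert P (Qle s x y r))"
            by (rule VidealD(2)[OF Vgen_Videal])
          then show ?thesis unfolding F'_def by simp
        qed
      qed
    qed
  qed
  show ?thesis using rt Fs(1) PQ W unfolding P_def by blast
qed


theorem theorem4p1:
  fixes m I :: "'a::comm_ring_1 set" and x :: "nat \<Rightarrow> 'a" and y :: 'a and s :: nat
  assumes noeth: "noetherian TYPE('a)"
    and loc: "local_ring m"
    and s1: "s \<ge> 1"
    and mingens: "minimal_gens I s x y"
    and Rseq: "reg_seq x s"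
    and Gseq: "G_reg_seq I x (s - 1)"
  defines "J \<equiv> gen_ideal (x ` {..<s})"
  shows "(\<forall>n\<ge>2.
            (\<forall>F\<in>Qdeg s x y n.
               meval (\<lambda>i. if i < s then 0 else 1) F
                 \<in> colon (ideal_prod J (ideal_pow I (n - 1))) (y ^ n))
          \<and> (\<forall>F G :: 'a mpoly. meval (\<lambda>i. if i < s then 0 else 1) (F + G)
                   = meval (\<lambda>i. if i < s then 0 else 1) F + meval (\<lambda>i. if i < s then 0 else 1) G)
          \<and> (\<forall>(c::'a) (F::'a mpoly). meval (\<lambda>i. if i < s then 0 else 1) (Const c * F)
                   = c * meval (\<lambda>i. if i < s then 0 else 1) F)
          \<and> (\<forall>F\<in>Qdeg s x y n.
               F \<in> Qle s x y (n - 1) \<longleftrightarrow>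
               meval (\<lambda>i. if i < s then 0 else 1) F
                 \<in> colon (ideal_prod J (ideal_pow I (n - 2))) (y ^ (n - 1)))
          \<and> (\<forall>a\<in>colon (ideal_prod J (ideal_pow I (n - 1))) (y ^ n).
               \<exists>F\<in>Qdeg s x y n. a - meval (\<lambda>i. if i < s then 0 else 1) F
                 \<in> colon (ideal_prod J (ideal_pow I (n - 2))) (y ^ (n - 1))))
       \<and> (is_reduction J I \<longrightarrow>
            relation_type s x y = reduction_number J I + 1
          \<and> (\<exists>Fs. (\<forall>i<s. Fs i \<in> Vdeg s (reduction_number J I))
               \<and> Var s ^ (reduction_number J I + 1) - (\<Sum>i<s. Var i * Fs i)
                   \<in> Qdeg s x y (reduction_number J I + 1)
               \<and> Qeq s x y = Vgen s (insert (Var s ^ (reduction_number J I + 1) - (\<Sum>i<s. Var i * Fs i))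
                                         (Qle s x y (reduction_number J I)))))"
proof -
  have I: "I = gen_ideal (insert y (x ` {..<s}))"
    and mg: "\<forall>S. finite S \<and> gen_ideal S = I \<longrightarrow> Suc s \<le> card S"
    using mingens unfolding minimal_gens_def by blast+
  have ev: "(\<lambda>i. if i < s then 0 else 1) = (ev1 s :: nat \<Rightarrow> 'a)" by (simp add: ev1_def)
  have JP: "ideal_prod J (ideal_pow I k) = lc x s (ideal_pow I k)" for k
    unfolding J_def by (rule ip_lc[OF ipow_ideal])
  have part1: "\<forall>n\<ge>2.
            (\<forall>F\<in>Qdeg s x y n. meval (ev1 s) F \<in> colon (lc x s (ideal_pow I (n - 1))) (y ^ n))
          \<and> (\<forall>F G :: 'a mpoly. meval (ev1 s) (F + G) = meval (ev1 s) F + meval (ev1 s) G)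
          \<and> (\<forall>(c::'a) (F::'a mpoly). meval (ev1 s) (Const c * F) = c * meval (ev1 s) F)
          \<and> (\<forall>F\<in>Qdeg s x y n. F \<in> Qle s x y (n - 1) \<longleftrightarrow>
               meval (ev1 s) F \<in> colon (lc x s (ideal_pow I (n - 2))) (y ^ (n - 1)))
          \<and> (\<forall>a\<in>colon (lc x s (ideal_pow I (n - 1))) (y ^ n).
               \<exists>F\<in>Qdeg s x y n. a - meval (ev1 s) F \<in> colon (lc x s (ideal_pow I (n - 2))) (y ^ (n - 1)))"
  proof (intro allI impI conjI ballI)
    fix n :: nat assume n: "2 \<le> n"
    have n1: "Suc (n - 1) = n" using n by simp
    show "meval (ev1 s) F \<in> colon (lc x s (ideal_pow I (n - 1))) (y ^ n)" if F: "F \<in> Qdeg s x y n" for F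
    proof -
      have "meval (ev1 s) F * y ^ Suc (n - 1) \<in> lc x s (ideal_pow I (n - 1))"
        using clause1[OF I, of F "n - 1"] F n1 by simp
      then show ?thesis using n1 by (simp add: colon_def)
    qed
    show "meval (ev1 s) (F + G) = meval (ev1 s) F + meval (ev1 s) G" for F G :: "'a mpoly"
      by (rule meval_add)
    show "meval (ev1 s) (Const c * F) = c * meval (ev1 s) F" for c and F :: "'a mpoly"
      by (simp add: meval_mult)
    show "F \<in> Qle s x y (n - 1) \<longleftrightarrow> meval (ev1 s) F \<in> colon (lc x s (ideal_pow I (n - 2))) (y ^ (n - 1))"
      if F: "F \<in> Qdeg s x y n" for F
      using clause4_fwd[OF I n, of F] clause4_bwd[OF I Rseq Gseq n F] by blast
    show "\<exists>F\<in>Qdeg s x y n. a - meval (ev1 s) F \<in> colon (lc x s (ideal_pow I (n - 2))) (y ^ (n - 1))"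
      if a: "a \<in> colon (lc x s (ideal_pow I (n - 1))) (y ^ n)" for a
    proof -
      obtain F where F: "F \<in> Qdeg s x y n" "meval (ev1 s) F = a"
        using clause5[OF I _ a] n by auto
      have "a - meval (ev1 s) F \<in> colon (lc x s (ideal_pow I (n - 2))) (y ^ (n - 1))"
        using F(2) is_idealD(1)[OF colon_ideal[OF lc_ideal[OF ipow_ideal]]] by simp
      then show ?thesis using F(1) by blast
    qed
  qed
  have part2: "is_reduction J I \<longrightarrow>
            relation_type s x y = reduction_number J I + 1
          \<and> (\<exists>Fs. (\<forall>i<s. Fs i \<in> Vdeg s (reduction_number J I))
               \<and> Var s ^ (reduction_number J I + 1) - (\<Sum>i<s. Var i * Fs i)
                   \<in> Qdeg s x y (reduction_number J I + 1)
               \<and> Qeq s x y = Vgen s (insert (Var s ^ (reduction_number J I + 1) - (\<Sum>i<s. Var i * Fs i))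
                                         (Qle s x y (reduction_number J I))))"
    using reduction_part[OF I mg Rseq Gseq] unfolding J_def by blast
  show ?thesis unfolding ev JP using part1 part2 by blast
qed


end
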